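(* Let $j\ge1$ be an integer. If $m\ge 2j+1$, then $$a_{2j-1}=\frac{1}{2^{j-1}\pi^j}\frac{1}{(m-2)(m-4)\cdots(m-2j)}\frac{1}{\sigma_m}T^*_{-m+2j},\qquad b_{2j-1}=-\frac{1}{2^{j-1}\pi^j}\frac{1}{(m-1)(m-3)\cdots(m-2j+1)}\frac{1}{\sigma_{m+1}}U^*_{-m+2j},$$ and if $m\ge2j+2$, then $$a_{2j}=-\frac{1}{2^{j-1}\pi^j}\frac{1}{(m-1)(m-3)\cdots(m-2j-1)}\frac{1}{\sigma_{m+1}}T^*_{-m+2j+1},\qquad b_{2j}=\frac{1}{2^{j}\pi^{j+1}}\frac{1}{(m-2)(m-4)\cdots(m-2j)}\frac{1}{\sigma_{m}}U^*_{-m+2j+1}.$$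
   Context: $\mathbb{R}_{0,m+1}$ is the real Clifford algebra generated by an orthonormal basis $e_0,\dots,e_m$ with $e_\alpha e_\beta+e_\beta e_\alpha=-2\delta_{\alpha\beta}$. Write $\underline{x}=\sum_{j=1}^m x_je_j\in\mathbb{R}^m$. $\sigma_n=2\pi^{n/2}/\Gamma(n/2)$. For an integer $n\ge1$, $T^*_{-m+n}$ denotes the locally integrable function $\frac{\pi^{n/2}}{\Gamma(n/2)}|\underline{x}|^{n-m}$ and $U^*_{-m+n}$ the locally integrable function $\frac{\pi^{(n+1)/2}}{\Gamma((n+1)/2)}\frac{\underline{x}}{|\underline{x}|}|\underline{x}|^{n-m}$ on $\mathbb{R}^m$. Convolutions are of $\mathbb{R}_{0,m+1}$-valued tempered distributions on $\mathbb{R}^m$, computed componentwise with Clifford products of basis elements kept in order. $a_0=-\frac{2}{(m-1)\sigma_{m+1}}\frac{1}{|\underline{x}|^{m-1}}$, $b_0=\frac{1}{\sigma_m}\frac{\underline{x}}{|\underline{x}|^m}$, and recursively $a_k=a_0*a_{k-1}$, $b_k=a_0*b_{k-1}$ for $k\ge1$ (with $m\ge k+2$). *)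

theory Defs
  imports "HOL-Analysis.Analysis"
begin

definition sigma :: "nat \<Rightarrow> real" where
  "sigma n = 2 * pi powr (real n / 2) / Gamma (real n / 2)"

definition Tstar :: "nat \<Rightarrow> real^'m \<Rightarrow> real" where
  "Tstar n x = pi powr (real n / 2) / Gamma (real n / 2)
       * norm x powr (real n - real CARD('m))"

text \<open>U*_{-m+n}(x) = pi^((n+1)/2)/Gamma((n+1)/2) (x/|x|) |x|^(n-m), a vector of R^m
  (the 1-vector part of the Clifford algebra).\<close>
definition Ustar :: "nat \<Rightarrow> real^'m \<Rightarrow> real^'m" where
  "Ustar n x = (pi powr ((real n + 1) / 2) / Gamma ((real n + 1) / 2)
       * norm x powr (real n - real CARD('m)) / norm x) *\<^sub>R x"

definition azero :: "real^'m \<Rightarrow> real" where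
  "azero x = - 2 / ((real CARD('m) - 1) * sigma (CARD('m) + 1))
                    / norm x powr (real CARD('m) - 1)"

primrec acoef :: "nat \<Rightarrow> real^'m \<Rightarrow> real" where
  "acoef 0 x = azero x"
| "acoef (Suc k) x = (LINT y|lborel. azero y * acoef k (x - y))"

primrec bcoef :: "nat \<Rightarrow> real^'m \<Rightarrow> real^'m" where
  "bcoef 0 x = (1 / sigma CARD('m) / norm x powr real CARD('m)) *\<^sub>R x"
| "bcoef (Suc k) x = (LINT y|lborel. azero y *\<^sub>R bcoef k (x - y))"

end

theory Submission
  imports Defs "HOL-Probability.Distributions"
begin


definition hk :: "real \<Rightarrow> real^'m \<Rightarrow> real" where
  "hk t x = (4*pi*t) powr (- real CARD('m) / 2) * exp (- (norm x ^ 2) / (4*t))"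

lemma hk_nonneg: "hk t x \<ge> 0" by (simp add: hk_def)

lemma hk_measurable[measurable (raw)]:
  assumes [measurable]: "f \<in> borel_measurable M" "g \<in> borel_measurable M"
  shows "(\<lambda>x. hk (f x) (g x :: real^'m)) \<in> borel_measurable M"
  unfolding hk_def by measurable

lemma hk_prod:
  fixes x :: "real^'m"
  assumes t: "t > 0"
  shows "hk t x = (\<Prod>b\<in>Basis. normal_density 0 (sqrt (2*t)) (x \<bullet> b))"
proof -
  have nd: "normal_density 0 (sqrt (2*t)) v = (4*pi*t) powr (-1/2) * exp (- (v^2)/(4*t))" for v
    using t by (simp add: normal_density_def powr_minus powr_half_sqrt field_simps)
  have "(\<Prod>b\<in>Basis. normal_density 0 (sqrt (2*t)) (x \<bullet> b))
      = ((4*pi*t) powr (-1/2))^CARD('m) * exp (\<Sum>b\<in>Basis. - ((x\<bullet>b)^2)/(4*t))"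
    by (simp add: nd prod.distrib exp_sum)
  also have "(\<Sum>b\<in>Basis. - ((x\<bullet>b)^2)/(4*t)) = - (norm x ^ 2)/(4*t)"
  proof -
    have "norm x ^ 2 = x \<bullet> x" by (simp add: power2_norm_eq_inner)
    also have "x \<bullet> x = (\<Sum>b\<in>Basis. (x\<bullet>b)^2)" by (subst euclidean_inner) (simp add: power2_eq_square)
    finally show ?thesis by (simp add: sum_negf sum_divide_distrib)
  qed
  also have "((4*pi*t) powr (-1/2))^CARD('m) = (4*pi*t) powr (- real CARD('m) / 2)"
    using t by (simp add: powr_realpow[symmetric] powr_powr)
  finally show ?thesis by (simp add: hk_def)
qed

lemma hk_total:
  assumes t: "t > 0"
  shows "(\<integral>\<^sup>+x. ennreal (hk t (x::real^'m)) \<partial>lborel) = 1"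
proof -
  have "(\<integral>\<^sup>+x. ennreal (hk t (x::real^'m)) \<partial>lborel)
      = (\<integral>\<^sup>+x. (\<Prod>b\<in>Basis. ennreal (normal_density 0 (sqrt (2*t)) ((x::real^'m) \<bullet> b))) \<partial>lborel)"
    using t by (simp add: hk_prod prod_ennreal)
  also have "\<dots> = (\<Prod>b\<in>(Basis::(real^'m) set). (\<integral>\<^sup>+v. ennreal (normal_density 0 (sqrt (2*t)) v) \<partial>lborel))"
    by (rule nn_integral_lborel_prod) auto
  also have "(\<integral>\<^sup>+v. ennreal (normal_density 0 (sqrt (2*t)) v) \<partial>lborel) = 1"
    using t by (subst nn_integral_eq_integral) auto
  finally show ?thesis by simp
qed

lemma lborel_uminus_eq: "distr lborel borel uminus = (lborel :: ('a::euclidean_space) measure)"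
proof -
  have "(lborel :: 'a measure) = density (distr lborel borel (\<lambda>x. 0 + (-1) *\<^sub>R x)) (\<lambda>_. \<bar>-1::real\<bar>^DIM('a))"
    by (rule lborel_affine) simp
  then show ?thesis by (simp add: density_1)
qed

lemma nn_integral_lborel_shift:
  fixes f :: "'a::euclidean_space \<Rightarrow> ennreal"
  assumes [measurable]: "f \<in> borel_measurable borel"
  shows "(\<integral>\<^sup>+y. f (y + c) \<partial>lborel) = (\<integral>\<^sup>+y. f y \<partial>lborel)"
proof -
  have "(\<integral>\<^sup>+y. f y \<partial>lborel) = (\<integral>\<^sup>+y. f y \<partial>distr lborel borel ((+) c))"
    by (simp add: lborel_distr_plus)
  also have "\<dots> = (\<integral>\<^sup>+y. f (c + y) \<partial>lborel)"
    by (subst nn_integral_distr) auto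
  finally show ?thesis by (simp add: add.commute)
qed

lemma integral_lborel_shift:
  fixes f :: "'a::euclidean_space \<Rightarrow> 'b::{banach, second_countable_topology}"
  assumes [measurable]: "f \<in> borel_measurable borel"
  shows "(\<integral>y. f (y + c) \<partial>lborel) = (\<integral>y. f y \<partial>lborel)"
proof -
  have "(\<integral>y. f y \<partial>lborel) = (\<integral>y. f y \<partial>distr lborel borel ((+) c))"
    by (simp add: lborel_distr_plus)
  also have "\<dots> = (\<integral>y. f (c + y) \<partial>lborel)"
    by (subst integral_distr) auto
  finally show ?thesis by (simp add: add.commute)
qed

lemma integral_lborel_uminus:
  fixes f :: "'a::euclidean_space \<Rightarrow> 'b::{banach, second_countable_topology}"
  assumes [measurable]: "f \<in> borel_measurable borel"
  shows "(\<integral>y. f (- y) \<partial>lborel) = (\<integral>y. f y \<partial>lborel)"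
proof -
  have "(\<integral>y. f y \<partial>lborel) = (\<integral>y. f y \<partial>distr lborel borel uminus)"
    by (simp add: lborel_uminus_eq)
  also have "\<dots> = (\<integral>y. f (- y) \<partial>lborel)"
    by (subst integral_distr) auto
  finally show ?thesis by simp
qed

lemma ex_aux0:
  fixes a b c t s d :: real
  assumes t: "t > 0" and s: "s > 0" and d: "d = t + s"
  shows "- b / (4*t) + - (a - 2 * c + b) / (4 * s)
      = - a / (4*d) + - (b - 2 * (t/d) * c + (t/d)^2 * a) / (4*(t * s / d))"
proof -
  have "d > 0" using t s d by simp
  then show ?thesis using t s
    by (simp add: field_simps power2_eq_square) (simp add: d algebra_simps)
qed
lemma ex_aux:
  fixes a b c t s :: real
  assumes t: "t > 0" and s: "s > 0"
  shows "- b / (4*t) + - (a - 2 * c + b) / (4 * s)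
      = - a / (4*(t+s)) + - (b - 2 * (t/(t+s)) * c + (t/(t+s))^2 * a) / (4*(t * s / (t + s)))"
  using ex_aux0[OF t s refl] .

lemma hk_split:
  fixes x y :: "real^'m"
  assumes t: "t > 0" and s: "s > 0"
  shows "hk t y * hk s (x - y) = hk (t+s) x * hk (t * s / (t + s)) (y - (t/(t+s)) *\<^sub>R x)"
proof -
  define p where "p = - real CARD('m) / 2"
  have pf: "(4*pi*t) powr p * (4 * pi * s) powr p = (4*pi*(t+s)) powr p * (4*pi*(t * s / (t + s))) powr p"
  proof -
    have "(4*pi*t) powr p * (4 * pi * s) powr p = ((4*pi*t) * (4 * pi * s)) powr p"
      using t s by (subst powr_mult) auto
    also have "(4*pi*t) * (4 * pi * s) = (4*pi*(t+s)) * (4*pi*(t * s / (t + s)))"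
      using t s by (simp add: field_simps)
    also have "(\<dots>) powr p = (4*pi*(t+s)) powr p * (4*pi*(t * s / (t + s))) powr p"
      using t s by (subst powr_mult) auto
    finally show ?thesis .
  qed
  have n1: "norm (x - y) ^ 2 = norm x ^ 2 - 2 * (x \<bullet> y) + norm y ^ 2"
    by (simp add: power2_norm_eq_inner inner_diff_left inner_diff_right inner_commute)
  have n2: "norm (y - (t/(t+s)) *\<^sub>R x) ^ 2 = norm y ^ 2 - 2 * (t/(t+s)) * (x \<bullet> y) + (t/(t+s))^2 * norm x ^ 2"
    by (simp only: power2_norm_eq_inner) (simp add: inner_diff_left inner_diff_right inner_commute power2_eq_square algebra_simps)
  have ex: "- (norm y ^ 2) / (4*t) + - (norm (x - y) ^ 2) / (4 * s)
      = - (norm x ^ 2) / (4*(t+s)) + - (norm (y - (t/(t+s)) *\<^sub>R x) ^ 2) / (4*(t * s / (t + s)))"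
    unfolding n1 n2 using ex_aux[OF t s] .
  have L: "hk t y * hk s (x-y) = ((4*pi*t) powr p * (4 * pi * s) powr p) * (exp (- (norm y ^ 2) / (4*t)) * exp (- (norm (x - y) ^ 2) / (4 * s)))"
    by (simp add: hk_def p_def mult_ac)
  have R: "hk (t+s) x * hk (t * s / (t + s)) (y - (t/(t+s)) *\<^sub>R x) = ((4*pi*(t+s)) powr p * (4*pi*(t * s / (t + s))) powr p) * (exp (- (norm x ^ 2) / (4*(t+s))) * exp (- (norm (y - (t/(t+s)) *\<^sub>R x) ^ 2) / (4*(t * s / (t + s)))))"
    by (simp add: hk_def p_def mult_ac)
  show ?thesis by (simp only: L R mult_exp_exp pf ex)
qed

lemma hk_conv:
  fixes x :: "real^'m"
  assumes t: "t > 0" and s: "s > 0"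
  shows "(\<integral>\<^sup>+y. ennreal (hk t y * hk s (x - y)) \<partial>lborel) = ennreal (hk (t+s) x)"
proof -
  have "(\<integral>\<^sup>+y. ennreal (hk t y * hk s (x - y)) \<partial>lborel)
      = (\<integral>\<^sup>+y. ennreal (hk (t+s) x) * ennreal (hk (t * s / (t + s)) (y - (t/(t+s)) *\<^sub>R x)) \<partial>lborel)"
    using t s by (simp add: hk_split ennreal_mult hk_nonneg)
  also have "\<dots> = ennreal (hk (t+s) x) * (\<integral>\<^sup>+y. ennreal (hk (t * s / (t + s)) (y - (t/(t+s)) *\<^sub>R x)) \<partial>lborel)"
    by (rule nn_integral_cmult) measurable
  also have "(\<integral>\<^sup>+y. ennreal (hk (t * s / (t + s)) (y - (t/(t+s)) *\<^sub>R x)) \<partial>lborel)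
      = (\<integral>\<^sup>+y. ennreal (hk (t * s / (t + s)) (y::real^'m)) \<partial>lborel)"
    using nn_integral_lborel_shift[of "\<lambda>y. ennreal (hk (t * s / (t + s)) (y::real^'m))" "- (t/(t+s)) *\<^sub>R x"]
    by simp
  also have "\<dots> = 1" using t s by (intro hk_total) simp
  finally show ?thesis by simp
qed

lemma hk_integrable:
  assumes t: "t > 0"
  shows "integrable lborel (hk t :: real^'m \<Rightarrow> real)"
  using hk_total[OF t, where 'm='m]
  by (subst integrable_iff_bounded) (auto simp: hk_nonneg)

lemma hk_integral:
  assumes t: "t > 0"
  shows "(\<integral>x. hk t (x::real^'m) \<partial>lborel) = 1"
  using hk_total[OF t, where 'm='m]
  by (subst integral_eq_nn_integral) (auto simp: hk_nonneg)

lemma aux_bound: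
  fixes u t :: real
  assumes t: "t > 0" and u: "u \<ge> 0"
  shows "u * exp (- (u^2) / (4*t)) \<le> 2 * sqrt t * exp (- (u^2) / (8*t))"
proof -
  define r where "r = sqrt t"
  have r: "r > 0" "t = r^2" using t by (auto simp: r_def)
  have "0 \<le> (u - 2*r)^2 / (4*r)" using r by simp
  also have "(u - 2*r)^2 / (4*r) = r + u^2/(4*r) - u"
    using r by (simp add: field_simps power2_eq_square)
  finally have h: "u \<le> 2*r + u^2/(4*r)" using r
    by (smt (verit) divide_nonneg_pos zero_le_power2)
  have "2 * r * (1 + u^2/(8*t)) = 2*r + u^2/(4*r)"
    using r by (simp add: field_simps power2_eq_square)
  with h have "u \<le> 2 * r * (1 + u^2/(8*t))" by simp
  also have "\<dots> \<le> 2 * r * exp (u^2/(8*t))"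
    using r by (intro mult_left_mono) (auto simp: exp_ge_add_one_self)
  finally have a: "u \<le> 2 * r * exp (u^2/(8*t))" .
  have "u * exp (- (u^2) / (4*t)) \<le> (2 * r * exp (u^2/(8*t))) * exp (- (u^2) / (4*t))"
    using a by (intro mult_right_mono) auto
  also have "\<dots> = 2 * r * (exp (u^2/(8*t)) * exp (- (u^2) / (4*t)))" by simp
  also have "exp (u^2/(8*t)) * exp (- (u^2) / (4*t)) = exp (- (u^2) / (8*t))"
    unfolding mult_exp_exp using t by (intro arg_cong[where f=exp]) (simp add: field_simps)
  finally show ?thesis by (simp add: r_def)
qed

lemma hk_moment_integrable:
  assumes t: "t > 0"
  shows "integrable lborel (\<lambda>z::real^'m. hk t z *\<^sub>R z)"
proof (rule Bochner_Integration.integrable_bound)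
  define C where "C = 2 * sqrt t * 2 powr (real CARD('m) / 2)"
  show "integrable lborel (\<lambda>z::real^'m. C * hk (2*t) z)"
    using hk_integrable[of "2*t"] t by auto
  show "(\<lambda>z::real^'m. hk t z *\<^sub>R z) \<in> borel_measurable lborel" by measurable
  show "AE z in lborel. norm (hk t z *\<^sub>R z) \<le> norm (C * hk (2*t) (z::real^'m))"
  proof (rule AE_I2)
    fix z :: "real^'m"
    have "norm (hk t z *\<^sub>R z) = (4*pi*t) powr (- real CARD('m) / 2) * (norm z * exp (- (norm z ^ 2) / (4*t)))"
      by (simp add: hk_def abs_mult mult_ac)
    also have "\<dots> \<le> (4*pi*t) powr (- real CARD('m) / 2) * (2 * sqrt t * exp (- (norm z ^ 2) / (8*t)))"
      using t by (intro mult_left_mono aux_bound) auto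
    also have "(4*pi*t) powr (- real CARD('m) / 2) = 2 powr (real CARD('m) / 2) * (4*pi*(2*t)) powr (- real CARD('m) / 2)"
    proof -
      have "(4*pi*(2*t)) powr (- real CARD('m) / 2) = 2 powr (- real CARD('m) / 2) * (4*pi*t) powr (- real CARD('m) / 2)"
        using t by (subst powr_mult[symmetric]) (auto simp: mult_ac)
      then show ?thesis by (simp add: powr_minus field_simps)
    qed
    also have "2 powr (real CARD('m) / 2) * (4*pi*(2*t)) powr (- real CARD('m) / 2) * (2 * sqrt t * exp (- (norm z ^ 2) / (8*t)))
        = C * hk (2*t) z"
      by (simp add: C_def hk_def mult_ac)
    also have "\<dots> \<le> norm (C * hk (2*t) z)" by simp
    finally show "norm (hk t z *\<^sub>R z) \<le> norm (C * hk (2*t) z)" .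
  qed
qed

lemma hk_uminus: "hk t (- z) = hk t z"
  by (simp add: hk_def)

lemma hk_moment_zero:
  assumes t: "t > 0"
  shows "(\<integral>z. hk t z *\<^sub>R z \<partial>lborel) = (0::real^'m)"
proof -
  have m: "(\<lambda>z::real^'m. hk t z *\<^sub>R z) \<in> borel_measurable borel" by measurable
  have e1: "(\<integral>z. hk t (-z) *\<^sub>R (-z) \<partial>lborel) = (\<integral>z. hk t z *\<^sub>R (z::real^'m) \<partial>lborel)"
    by (rule integral_lborel_uminus[OF m])
  have e2: "(\<lambda>z. hk t (-z) *\<^sub>R (-z)) = (\<lambda>z::real^'m. - (hk t z *\<^sub>R z))"
    by (simp only: hk_uminus scaleR_minus_right)
  from e1 have "(\<integral>z. - (hk t z *\<^sub>R z) \<partial>lborel) = (\<integral>z. hk t z *\<^sub>R (z::real^'m) \<partial>lborel)"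
    by (simp only: e2)
  then have h: "- (\<integral>z. hk t z *\<^sub>R z \<partial>lborel) = (\<integral>z. hk t z *\<^sub>R (z::real^'m) \<partial>lborel)"
    by (simp only: integral_minus)
  define I where "I = (\<integral>z. hk t z *\<^sub>R (z::real^'m) \<partial>lborel)"
  from h have "- I = I" by (simp only: I_def)
  then have "I + I = 0" by (metis add.right_inverse)
  then have "(2::real) *\<^sub>R I = 0" by (simp only: scaleR_2)
  then show ?thesis by (simp add: I_def)
qed

lemma hk_conv_vec:
  fixes x :: "real^'m"
  assumes t: "t > 0" and s: "s > 0"
  shows "(\<integral>y. (hk t y * hk s (x - y)) *\<^sub>R (x - y) \<partial>lborel) = (s / (t + s) * hk (t+s) x) *\<^sub>R x"
proof -
  define \<sigma> where "\<sigma> = t * s / (t + s)"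
  define \<mu> where "\<mu> = (t/(t+s)) *\<^sub>R x"
  have sg: "\<sigma> > 0" using t s by (simp add: \<sigma>_def)
  have "(\<integral>y. (hk t y * hk s (x - y)) *\<^sub>R (x - y) \<partial>lborel)
      = (\<integral>y. hk (t+s) x *\<^sub>R (hk \<sigma> (y + - \<mu>) *\<^sub>R ((x - \<mu>) - (y + - \<mu>))) \<partial>lborel)"
  proof (rule Bochner_Integration.integral_cong[OF refl])
    fix y :: "real^'m"
    have A: "hk t y * hk s (x - y) = hk (t+s) x * hk \<sigma> (y + - \<mu>)"
      unfolding \<sigma>_def \<mu>_def diff_conv_add_uminus[symmetric] by (rule hk_split[OF t s])
    have B: "(x - \<mu>) - (y + - \<mu>) = x - y" by simp
    show "(hk t y * hk s (x - y)) *\<^sub>R (x - y) = hk (t+s) x *\<^sub>R (hk \<sigma> (y + - \<mu>) *\<^sub>R ((x - \<mu>) - (y + - \<mu>)))"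
      by (simp only: A B scaleR_scaleR)
  qed
  also have "\<dots> = hk (t+s) x *\<^sub>R (\<integral>y. hk \<sigma> (y + - \<mu>) *\<^sub>R ((x - \<mu>) - (y + - \<mu>)) \<partial>lborel)"
    by (rule integral_scaleR_right)
  also have "(\<integral>y. hk \<sigma> (y + - \<mu>) *\<^sub>R ((x - \<mu>) - (y + - \<mu>)) \<partial>lborel)
      = (\<integral>z. hk \<sigma> z *\<^sub>R ((x - \<mu>) - z) \<partial>lborel)"
    by (rule integral_lborel_shift[where f="\<lambda>z. hk \<sigma> z *\<^sub>R ((x - \<mu>) - z)"]) measurable
  also have "\<dots> = (\<integral>z. hk \<sigma> z *\<^sub>R (x - \<mu>) - hk \<sigma> z *\<^sub>R z \<partial>lborel)"
    by (simp add: scaleR_diff_right)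
  also have "\<dots> = (\<integral>z. hk \<sigma> (z::real^'m) *\<^sub>R (x - \<mu>) \<partial>lborel) - (\<integral>z. hk \<sigma> z *\<^sub>R z \<partial>lborel)"
  proof -
    have i1: "integrable lborel (\<lambda>z::real^'m. hk \<sigma> z *\<^sub>R (x - \<mu>))"
      using hk_integrable[OF sg, where 'm='m] by auto
    note th = Bochner_Integration.integral_diff[OF i1 hk_moment_integrable[OF sg]]
    show ?thesis by (rule th)
  qed
  also have "\<dots> = x - \<mu>"
    using hk_integrable[OF sg, where 'm='m] hk_integral[OF sg, where 'm='m] hk_moment_zero[OF sg, where 'm='m]
    by simp
  also have "x - \<mu> = (s / (t + s)) *\<^sub>R x"
  proof -
    have c: "1 - t/(t+s) = s/(t+s)" using t s by (simp add: field_simps)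
    show ?thesis unfolding \<mu>_def by (metis c scaleR_diff_left scaleR_one)
  qed
  finally show ?thesis by simp
qed


lemma gamma_inv_has_integral:
  fixes c k :: real
  assumes c: "c > 0" and k: "k > 0"
  shows "((\<lambda>t. t powr (-c-1) * exp (-k/t)) has_integral (Gamma c * k powr (-c))) {0<..}"
proof -
  define f where "f = (\<lambda>v::real. v powr (c - 1) / exp v)"
  define g where "g = (\<lambda>t::real. k / t)"
  define g' where "g' = (\<lambda>t::real. - k / t^2)"
  have G0: "(f has_integral Gamma c) {0..}" unfolding f_def by (rule Gamma_integral_real[OF c])
  have G: "(f has_integral Gamma c) {0<..}"
  proof -
    have "negligible {x \<in> {0..} - {0<..}. f x \<noteq> 0}"
      by (rule negligible_subset[of "{0}"]) auto
    moreover have "negligible {x \<in> {0<..} - {0..}. f x \<noteq> (0::real)}"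
      by (rule negligible_subset[of "{}"]) auto
    ultimately show ?thesis using G0 by (subst (asm) has_integral_spike_set_eq) auto
  qed
  have img: "g ` {0<..} = {0<..}"
  proof
    show "g ` {0<..} \<subseteq> {0<..}" using k by (auto simp: g_def)
    show "{0<..} \<subseteq> g ` {0<..}"
    proof
      fix v :: real assume "v \<in> {0<..}"
      then have "v = g (k / v)" "k / v \<in> {0<..}" using k by (auto simp: g_def)
      then show "v \<in> g ` {0<..}" by blast
    qed
  qed
  have der: "(g has_field_derivative g' t) (at t within {0<..})" if "t \<in> {0<..}" for t
    using that unfolding g_def g'_def
    by (auto intro!: derivative_eq_intros simp: power2_eq_square field_simps)
  have inj: "inj_on g {0<..}" using k by (auto simp: inj_on_def g_def field_simps)
  have fabs: "f absolutely_integrable_on {0<..}"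
    using G by (intro nonnegative_absolutely_integrable_1) (auto simp: f_def)
  have "(\<lambda>x. \<bar>g' x\<bar> * f (g x)) absolutely_integrable_on {0<..} \<and>
           integral {0<..} (\<lambda>x. \<bar>g' x\<bar> * f (g x)) = Gamma c"
    using has_absolute_integral_change_of_variables_1'[of "{0<..}" g g' f "Gamma c"] der inj img fabs G
    by (auto simp: integral_unique)
  then have H: "((\<lambda>x. \<bar>g' x\<bar> * f (g x)) has_integral Gamma c) {0<..}"
    by (metis absolutely_integrable_on_def has_integral_integral)
  have eq: "\<bar>g' t\<bar> * f (g t) = k powr c * (t powr (-c-1) * exp (-k/t))" if "t \<in> {0<..}" for t
  proof -
    have t: "t > 0" using that by simp
    have "\<bar>g' t\<bar> * f (g t) = (k / t^2) * ((k powr (c-1) / t powr (c-1)) / exp (k/t))"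
      using t k by (simp add: g'_def f_def g_def powr_divide)
    also have "\<dots> = k powr c * (t powr (-c-1) * exp (-k/t))"
      using t k by (simp add: powr_diff powr_minus exp_minus field_simps power2_eq_square powr_add)
    finally show ?thesis .
  qed
  have H2: "((\<lambda>t. k powr c * (t powr (-c-1) * exp (-k/t))) has_integral Gamma c) {0<..}"
    using H by (rule has_integral_spike_eq[of "{}", THEN iffD1, rotated 2]) (use eq in auto)
  have "((\<lambda>t. k powr (-c) * (k powr c * (t powr (-c-1) * exp (-k/t)))) has_integral k powr (-c) * Gamma c) {0<..}"
    using has_integral_mult_right[OF H2] .
  moreover have "(\<lambda>t. k powr (-c) * (k powr c * (t powr (-c-1) * exp (-k/t)))) = (\<lambda>t. t powr (-c-1) * exp (-k/t))"
  proof -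
    have kk: "k powr (-c) * k powr c = 1" using k by (simp add: powr_add[symmetric])
    show ?thesis by (simp add: mult.assoc[symmetric] kk)
  qed
  ultimately show ?thesis by (simp add: mult.commute)
qed

lemma gamma_inv_nn:
  fixes c k :: real
  assumes c: "c > 0" and k: "k > 0"
  shows "(\<integral>\<^sup>+t. ennreal (indicator {0<..} t * (t powr (-c-1) * exp (-k/t))) \<partial>lborel) = ennreal (Gamma c * k powr (-c))"
  by (rule nn_integral_has_integral_lebesgue[OF _ gamma_inv_has_integral[OF c k]]) auto

definition cR :: "real \<Rightarrow> real \<Rightarrow> real" where
  "cR n a = pi powr (-n/2) * 4 powr (-a) * Gamma (n/2 - a)"

lemma cR_pos: "a < n/2 \<Longrightarrow> cR n a > 0"
  by (simp add: cR_def Gamma_real_pos)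

lemma hk_rep:
  fixes x :: "real^'m"
  assumes x: "x \<noteq> 0" and a: "a < real CARD('m) / 2"
  shows "(\<integral>\<^sup>+t. ennreal (indicator {0<..} t * t powr (a-1) * hk t x) \<partial>lborel)
       = ennreal (cR (real CARD('m)) a * norm x powr (2*a - real CARD('m)))"
proof -
  define n where "n = real CARD('m)"
  define c where "c = n/2 - a"
  define k where "k = norm x ^ 2 / 4"
  have c: "c > 0" using a by (simp add: c_def n_def)
  have k: "k > 0" using x by (simp add: k_def)
  have pt: "indicator {0<..} t * t powr (a-1) * hk t x
      = (4*pi) powr (-n/2) * (indicator {0<..} t * (t powr (-c-1) * exp (-k/t)))" for t
  proof (cases "t > 0")
    case True
    have "t powr (a-1) * (4*pi*t) powr (-n/2) = (4*pi) powr (-n/2) * t powr (-c-1)"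
      using True by (simp add: powr_mult c_def powr_add[symmetric] algebra_simps)
    moreover have "exp (- (norm x ^ 2) / (4*t)) = exp (-k/t)"
      by (simp add: k_def field_simps)
    ultimately show ?thesis using True
      by (simp add: hk_def n_def indicator_def mult_ac)
  qed (simp add: indicator_def)
  have "(\<integral>\<^sup>+t. ennreal (indicator {0<..} t * t powr (a-1) * hk t x) \<partial>lborel)
      = (\<integral>\<^sup>+t. ennreal ((4*pi) powr (-n/2)) * ennreal (indicator {0<..} t * (t powr (-c-1) * exp (-k/t))) \<partial>lborel)"
    by (simp add: pt ennreal_mult)
  also have "\<dots> = ennreal ((4*pi) powr (-n/2)) * (\<integral>\<^sup>+t. ennreal (indicator {0<..} t * (t powr (-c-1) * exp (-k/t))) \<partial>lborel)"
    by (rule nn_integral_cmult) measurable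
  also have "\<dots> = ennreal ((4*pi) powr (-n/2) * (Gamma c * k powr (-c)))"
    using c by (simp only: gamma_inv_nn[OF c k]) (rule ennreal_mult[symmetric]; simp add: Gamma_real_pos)
  also have "(4*pi) powr (-n/2) * (Gamma c * k powr (-c)) = cR n a * norm x powr (2*a - n)"
  proof -
    have nx: "norm x > 0" using x by simp
    have "k powr (-c) = (norm x powr 2 / 4) powr (-c)" using nx by (simp add: k_def powr_realpow)
    also have "\<dots> = (norm x powr 2) powr (-c) / 4 powr (-c)"
      by (simp add: powr_divide)
    also have "(norm x powr 2) powr (-c) = norm x powr (2*a - n)"
      by (simp only: powr_powr) (simp add: c_def algebra_simps)
    also have "norm x powr (2*a - n) / 4 powr (-c) = norm x powr (2*a - n) * 4 powr c"
      by (simp add: powr_minus divide_inverse)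
    finally have kc: "k powr (-c) = norm x powr (2*a - n) * 4 powr c" .
    have "(4*pi) powr (-n/2) = 4 powr (-n/2) * pi powr (-n/2)" by (simp add: powr_mult)
    moreover have "4 powr (-n/2) * 4 powr c = (4::real) powr (-a)"
      by (simp add: powr_add[symmetric] c_def)
    ultimately show ?thesis unfolding kc cR_def c_def[symmetric]
      by (simp add: mult_ac)
  qed
  finally show ?thesis by (simp add: n_def)
qed


lemma beta_nn:
  assumes a: "a > 0" and b: "b > 0"
  shows "(\<integral>\<^sup>+u. ennreal (indicator {0<..<1} u * (u powr (a-1) * (1-u) powr (b-1))) \<partial>lborel) = ennreal (Beta a b)"
proof -
  have "((\<lambda>u. u powr (a-1) * (1-u) powr (b-1)) has_integral Beta a b) {0<..<1}"
    using has_integral_Beta_real[OF a b] by (simp add: has_integral_Icc_iff_Ioo)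
  from nn_integral_has_integral_lebesgue[OF _ this] show ?thesis by auto
qed

lemma beta_inner:
  assumes a: "a > 0" and b: "b > 0"
  shows "(\<integral>\<^sup>+t. ennreal (indicator {0<..} t * indicator {0<..} (\<tau> - t) * (t powr (a-1) * (\<tau> - t) powr (b-1))) \<partial>lborel)
       = ennreal (indicator {0<..} \<tau> * \<tau> powr (a+b-1) * Beta a b)"
proof (cases "\<tau> > 0")
  case False
  then have "(\<lambda>t. ennreal (indicator {0<..} t * indicator {0<..} (\<tau> - t) * (t powr (a-1) * (\<tau> - t) powr (b-1)))) = (\<lambda>_. 0)"
    by (auto simp: indicator_def)
  with False show ?thesis by (simp only:) (simp add: indicator_def)
next
  case True
  have "(\<integral>\<^sup>+t. ennreal (indicator {0<..} t * indicator {0<..} (\<tau> - t) * (t powr (a-1) * (\<tau> - t) powr (b-1))) \<partial>lborel)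
      = ennreal \<bar>\<tau>\<bar> * (\<integral>\<^sup>+u. ennreal (indicator {0<..} (0 + \<tau> * u) * indicator {0<..} (\<tau> - (0 + \<tau> * u)) * ((0 + \<tau> * u) powr (a-1) * (\<tau> - (0 + \<tau> * u)) powr (b-1))) \<partial>lborel)"
    using True by (intro nn_integral_real_affine) auto
  also have "(\<lambda>u. ennreal (indicator {0<..} (0 + \<tau> * u) * indicator {0<..} (\<tau> - (0 + \<tau> * u)) * ((0 + \<tau> * u) powr (a-1) * (\<tau> - (0 + \<tau> * u)) powr (b-1))))
      = (\<lambda>u. ennreal (\<tau> powr (a+b-2)) * ennreal (indicator {0<..<1} u * (u powr (a-1) * (1-u) powr (b-1))))"
  proof
    fix u
    show "ennreal (indicator {0<..} (0 + \<tau> * u) * indicator {0<..} (\<tau> - (0 + \<tau> * u)) * ((0 + \<tau> * u) powr (a-1) * (\<tau> - (0 + \<tau> * u)) powr (b-1)))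
      = ennreal (\<tau> powr (a+b-2)) * ennreal (indicator {0<..<1} u * (u powr (a-1) * (1-u) powr (b-1)))"
    proof (cases "0 < u \<and> u < 1")
      case True
      have "\<tau> - \<tau> * u = \<tau> * (1 - u)" by (simp add: algebra_simps)
      moreover have "\<tau> powr (a+b-2) = \<tau> powr (a-1) * \<tau> powr (b-1)"
        by (simp add: powr_add[symmetric])
      ultimately show ?thesis using True \<open>\<tau> > 0\<close>
        by (simp add: indicator_def powr_mult ennreal_mult[symmetric] mult_ac mult_pos_pos)
    next
      case False
      then have "\<not> (0 < \<tau> * u \<and> \<tau> * u < \<tau>)" using \<open>\<tau> > 0\<close>
        by (auto simp: mult_less_cancel_left2 zero_less_mult_iff)
      then show ?thesis using False by (auto simp: indicator_def)
    qed
  qed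
  also have "ennreal \<bar>\<tau>\<bar> * (\<integral>\<^sup>+u. ennreal (\<tau> powr (a+b-2)) * ennreal (indicator {0<..<1} u * (u powr (a-1) * (1-u) powr (b-1))) \<partial>lborel)
      = ennreal \<bar>\<tau>\<bar> * (ennreal (\<tau> powr (a+b-2)) * ennreal (Beta a b))"
    by (subst nn_integral_cmult) (auto simp: beta_nn[OF a b])
  also have "\<dots> = ennreal (indicator {0<..} \<tau> * \<tau> powr (a+b-1) * Beta a b)"
  proof -
    have "\<tau> powr (a+b-1) = \<tau> powr (1 + (a+b-2))" by simp
    also have "\<dots> = \<tau> powr 1 * \<tau> powr (a+b-2)" by (rule powr_add)
    finally have "\<tau> * \<tau> powr (a+b-2) = \<tau> powr (a+b-1)" using True by simp
    then show ?thesis using True a b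
      by (simp add: ennreal_mult[symmetric] Beta_def Gamma_real_pos mult.assoc)
  qed
  finally show ?thesis .
qed

lemma beta_conv:
  fixes f :: "real \<Rightarrow> ennreal"
  assumes a: "a > 0" and b: "b > 0" and f[measurable]: "f \<in> borel_measurable borel"
  shows "(\<integral>\<^sup>+t. (\<integral>\<^sup>+s. ennreal (indicator {0<..} t * indicator {0<..} s * (t powr (a-1) * s powr (b-1))) * f (t+s) \<partial>lborel) \<partial>lborel)
       = ennreal (Beta a b) * (\<integral>\<^sup>+\<tau>. ennreal (indicator {0<..} \<tau> * \<tau> powr (a+b-1)) * f \<tau> \<partial>lborel)"
proof -
  define F where "F = (\<lambda>(t::real) (\<tau>::real). ennreal (indicator {0<..} t * indicator {0<..} (\<tau> - t) * (t powr (a-1) * (\<tau> - t) powr (b-1))) * f \<tau>)"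
  have Fm: "(\<lambda>(t,\<tau>). F t \<tau>) \<in> borel_measurable (lborel \<Otimes>\<^sub>M lborel)"
    unfolding F_def by measurable
  have S1: "(\<integral>\<^sup>+s. ennreal (indicator {0<..} t * indicator {0<..} s * (t powr (a-1) * s powr (b-1))) * f (t+s) \<partial>lborel)
      = (\<integral>\<^sup>+\<tau>. F t \<tau> \<partial>lborel)" for t
  proof -
    have m: "(\<lambda>\<tau>. F t \<tau>) \<in> borel_measurable borel" unfolding F_def by measurable
    have "(\<integral>\<^sup>+\<tau>. F t \<tau> \<partial>lborel) = ennreal \<bar>1\<bar> * (\<integral>\<^sup>+s. F t (t + 1 * s) \<partial>lborel)"
      by (rule nn_integral_real_affine[OF m]) simp
    also have "\<dots> = (\<integral>\<^sup>+s. F t (t + s) \<partial>lborel)" by simp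
    also have "\<dots> = (\<integral>\<^sup>+s. ennreal (indicator {0<..} t * indicator {0<..} s * (t powr (a-1) * s powr (b-1))) * f (t+s) \<partial>lborel)"
      by (intro nn_integral_cong) (simp add: F_def indicator_def)
    finally show ?thesis by simp
  qed
  have "(\<integral>\<^sup>+t. (\<integral>\<^sup>+s. ennreal (indicator {0<..} t * indicator {0<..} s * (t powr (a-1) * s powr (b-1))) * f (t+s) \<partial>lborel) \<partial>lborel)
      = (\<integral>\<^sup>+t. (\<integral>\<^sup>+\<tau>. F t \<tau> \<partial>lborel) \<partial>lborel)"
    by (simp add: S1)
  also have "\<dots> = (\<integral>\<^sup>+\<tau>. (\<integral>\<^sup>+t. F t \<tau> \<partial>lborel) \<partial>lborel)"
    by (rule lborel_pair.Fubini'[OF Fm, symmetric])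
  also have "\<dots> = (\<integral>\<^sup>+\<tau>. ennreal (Beta a b) * (ennreal (indicator {0<..} \<tau> * \<tau> powr (a+b-1)) * f \<tau>) \<partial>lborel)"
  proof (rule nn_integral_cong)
    fix \<tau> :: real
    have "(\<integral>\<^sup>+t. F t \<tau> \<partial>lborel) = (\<integral>\<^sup>+t. ennreal (indicator {0<..} t * indicator {0<..} (\<tau> - t) * (t powr (a-1) * (\<tau> - t) powr (b-1))) \<partial>lborel) * f \<tau>"
      unfolding F_def by (simp add: nn_integral_multc)
    also have "\<dots> = ennreal (indicator {0<..} \<tau> * \<tau> powr (a+b-1) * Beta a b) * f \<tau>"
      by (simp add: beta_inner[OF a b])
    also have "\<dots> = ennreal (Beta a b) * (ennreal (indicator {0<..} \<tau> * \<tau> powr (a+b-1)) * f \<tau>)"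
    proof -
      have B0: "Beta a b \<ge> 0" using a b by (simp add: Beta_def Gamma_real_pos less_imp_le)
      have X0: "indicator {0<..} \<tau> * \<tau> powr (a+b-1) \<ge> (0::real)" by simp
      have "ennreal (indicator {0<..} \<tau> * \<tau> powr (a+b-1) * Beta a b) = ennreal (Beta a b) * ennreal (indicator {0<..} \<tau> * \<tau> powr (a+b-1))"
        using ennreal_mult[OF X0 B0] by (simp add: mult.commute)
      then show ?thesis by (simp add: mult.assoc)
    qed
    finally show "(\<integral>\<^sup>+t. F t \<tau> \<partial>lborel) = ennreal (Beta a b) * (ennreal (indicator {0<..} \<tau> * \<tau> powr (a+b-1)) * f \<tau>)" .
  qed
  also have "\<dots> = ennreal (Beta a b) * (\<integral>\<^sup>+\<tau>. ennreal (indicator {0<..} \<tau> * \<tau> powr (a+b-1)) * f \<tau> \<partial>lborel)"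
    by (rule nn_integral_cmult) measurable
  finally show ?thesis .
qed


definition Rep :: "real \<Rightarrow> real^'m \<Rightarrow> ennreal" where
  "Rep a x = (\<integral>\<^sup>+t. ennreal (indicator {0<..} t * t powr (a-1) * hk t x) \<partial>lborel)"

lemma Rep_measurable[measurable]: "Rep a \<in> borel_measurable borel"
  unfolding Rep_def by measurable

lemma conv_pointwise:
  fixes x :: "real^'m"
  shows "(\<integral>\<^sup>+y. ennreal (indicator {0<..} t * t powr (a-1) * hk t y) * ennreal (indicator {0<..} s * s powr (b-1) * hk s (x - y)) \<partial>lborel)
       = ennreal (indicator {0<..} t * indicator {0<..} s * (t powr (a-1) * s powr (b-1))) * ennreal (hk (t+s) x)"
proof (cases "t > 0 \<and> s > 0")
  case True
  have "(\<integral>\<^sup>+y. ennreal (indicator {0<..} t * t powr (a-1) * hk t y) * ennreal (indicator {0<..} s * s powr (b-1) * hk s (x - y)) \<partial>lborel)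
      = (\<integral>\<^sup>+y. ennreal (t powr (a-1) * s powr (b-1)) * ennreal (hk t y * hk s (x - y)) \<partial>lborel)"
    using True by (intro nn_integral_cong) (simp add: ennreal_mult[symmetric] hk_nonneg mult_ac)
  also have "\<dots> = ennreal (t powr (a-1) * s powr (b-1)) * (\<integral>\<^sup>+y. ennreal (hk t y * hk s (x - y)) \<partial>lborel)"
    by (rule nn_integral_cmult) measurable
  also have "\<dots> = ennreal (t powr (a-1) * s powr (b-1)) * ennreal (hk (t+s) x)"
    using True by (simp add: hk_conv)
  finally show ?thesis using True by simp
next
  case False
  then show ?thesis by (auto simp: indicator_def)
qed

lemma riesz_rep:
  fixes x :: "real^'m"
  assumes a: "a > 0" and b: "b > 0"
  shows "(\<integral>\<^sup>+y. Rep a y * Rep b (x - y) \<partial>lborel) = ennreal (Beta a b) * Rep (a+b) x"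
proof -
  define g where "g = (\<lambda>t (y::real^'m). ennreal (indicator {0<..} t * t powr (a-1) * hk t y))"
  define h where "h = (\<lambda>s (z::real^'m). ennreal (indicator {0<..} s * s powr (b-1) * hk s z))"
  have gm[measurable]: "(\<lambda>(t, y). g t y) \<in> borel_measurable (borel \<Otimes>\<^sub>M borel)" unfolding g_def by measurable
  have hm[measurable]: "(\<lambda>(s, z). h s z) \<in> borel_measurable (borel \<Otimes>\<^sub>M borel)" unfolding h_def by measurable
  have S1: "Rep a y * Rep b (x - y) = (\<integral>\<^sup>+t. (\<integral>\<^sup>+s. g t y * h s (x - y) \<partial>lborel) \<partial>lborel)" for y
  proof -
    have "Rep a y * Rep b (x - y) = (\<integral>\<^sup>+t. g t y * Rep b (x - y) \<partial>lborel)"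
      unfolding Rep_def g_def by (rule nn_integral_multc[symmetric]) measurable
    also have "\<dots> = (\<integral>\<^sup>+t. (\<integral>\<^sup>+s. g t y * h s (x - y) \<partial>lborel) \<partial>lborel)"
      unfolding Rep_def h_def by (intro nn_integral_cong nn_integral_cmult[symmetric]) measurable
    finally show ?thesis .
  qed
  have "(\<integral>\<^sup>+y. Rep a y * Rep b (x - y) \<partial>lborel)
      = (\<integral>\<^sup>+y. (\<integral>\<^sup>+t. (\<integral>\<^sup>+s. g t y * h s (x - y) \<partial>lborel) \<partial>lborel) \<partial>lborel)"
    by (simp add: S1)
  also have "\<dots> = (\<integral>\<^sup>+t. (\<integral>\<^sup>+y. (\<integral>\<^sup>+s. g t y * h s (x - y) \<partial>lborel) \<partial>lborel) \<partial>lborel)"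
    by (rule lborel_pair.Fubini') measurable
  also have "\<dots> = (\<integral>\<^sup>+t. (\<integral>\<^sup>+s. (\<integral>\<^sup>+y. g t y * h s (x - y) \<partial>lborel) \<partial>lborel) \<partial>lborel)"
    by (intro nn_integral_cong lborel_pair.Fubini') measurable
  also have "\<dots> = (\<integral>\<^sup>+t. (\<integral>\<^sup>+s. ennreal (indicator {0<..} t * indicator {0<..} s * (t powr (a-1) * s powr (b-1))) * ennreal (hk (t+s) x) \<partial>lborel) \<partial>lborel)"
    unfolding g_def h_def by (simp only: conv_pointwise)
  also have "\<dots> = ennreal (Beta a b) * (\<integral>\<^sup>+\<tau>. ennreal (indicator {0<..} \<tau> * \<tau> powr (a+b-1)) * ennreal (hk \<tau> x) \<partial>lborel)"
    by (rule beta_conv[OF a b]) measurable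
  also have "(\<integral>\<^sup>+\<tau>. ennreal (indicator {0<..} \<tau> * \<tau> powr (a+b-1)) * ennreal (hk \<tau> x) \<partial>lborel) = Rep (a+b) x"
    unfolding Rep_def by (intro nn_integral_cong) (simp add: ennreal_mult[symmetric] hk_nonneg)
  finally show ?thesis .
qed


lemma Rep_closed:
  fixes x :: "real^'m"
  assumes x: "x \<noteq> 0" and a: "a < real CARD('m) / 2"
  shows "Rep a x = ennreal (cR (real CARD('m)) a * norm x powr (2*a - real CARD('m)))"
  unfolding Rep_def by (rule hk_rep[OF x a])

lemma ennreal_cancel_left:
  assumes c: "c > 0" and d: "d \<ge> 0" and e: "ennreal c * I = ennreal d"
  shows "I = ennreal (d / c)"
proof -
  have "I = ennreal (1/c) * (ennreal c * I)"
    using c by (simp add: ennreal_mult[symmetric] mult.assoc[symmetric])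
  also have "\<dots> = ennreal (d / c)" using e c d by (simp add: ennreal_mult[symmetric])
  finally show ?thesis .
qed

lemma riesz_scalar_nn:
  fixes x :: "real^'m"
  defines "n \<equiv> real CARD('m)"
  assumes x: "x \<noteq> 0" and a: "a > 0" and b: "b > 0" and ab: "a + b < n/2"
  shows "(\<integral>\<^sup>+y. ennreal (norm y powr (2*a - n) * norm (x - y) powr (2*b - n)) \<partial>lborel)
       = ennreal (Beta a b * cR n (a+b) / (cR n a * cR n b) * norm x powr (2*(a+b) - n))"
proof -
  have an: "a < n/2" and bn: "b < n/2" using a b ab by auto
  have cpos: "cR n a * cR n b > 0" using an bn by (simp add: cR_pos)
  have "(\<integral>\<^sup>+y. Rep a y * Rep b (x - y) \<partial>lborel)
      = (\<integral>\<^sup>+y. ennreal (cR n a * cR n b) * ennreal (norm y powr (2*a - n) * norm (x - y) powr (2*b - n)) \<partial>lborel)"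
  proof (rule nn_integral_cong_AE)
    show "AE y in lborel. Rep a y * Rep b (x - y) = ennreal (cR n a * cR n b) * ennreal (norm y powr (2*a - n) * norm (x - y) powr (2*b - n))"
      using AE_lborel_singleton[of 0] AE_lborel_singleton[of x]
    proof eventually_elim
      case (elim y)
      then have "x - y \<noteq> 0" by simp
      with elim show ?case using an bn cR_pos[OF an] cR_pos[OF bn]
        by (simp add: Rep_closed n_def[symmetric] ennreal_mult[symmetric] mult_ac)
    qed
  qed
  also have "\<dots> = ennreal (cR n a * cR n b) * (\<integral>\<^sup>+y. ennreal (norm y powr (2*a - n) * norm (x - y) powr (2*b - n)) \<partial>lborel)"
    by (rule nn_integral_cmult) measurable
  finally have e: "ennreal (cR n a * cR n b) * (\<integral>\<^sup>+y. ennreal (norm y powr (2*a - n) * norm (x - y) powr (2*b - n)) \<partial>lborel)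
      = ennreal (Beta a b * (cR n (a+b) * norm x powr (2*(a+b) - n)))"
    using riesz_rep[OF a b, of x] Rep_closed[OF x, of "a+b"] ab a b
    by (simp add: n_def ennreal_mult[symmetric] Beta_def Gamma_real_pos cR_def)
  have "Beta a b * (cR n (a+b) * norm x powr (2*(a+b) - n)) \<ge> 0"
    using a b ab by (simp add: Beta_def Gamma_real_pos cR_pos less_imp_le)
  from ennreal_cancel_left[OF cpos this e] show ?thesis by (simp add: field_simps)
qed


lemma Rep_mult:
  fixes y z :: "real^'m"
  shows "Rep a y * Rep b z = (\<integral>\<^sup>+t. (\<integral>\<^sup>+s. ennreal (indicator {0<..} t * t powr (a-1) * hk t y) * ennreal (indicator {0<..} s * s powr (b-1) * hk s z) \<partial>lborel) \<partial>lborel)"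
proof -
  have "Rep a y * Rep b z = (\<integral>\<^sup>+t. ennreal (indicator {0<..} t * t powr (a-1) * hk t y) * Rep b z \<partial>lborel)"
    unfolding Rep_def by (rule nn_integral_multc[symmetric]) measurable
  also have "\<dots> = (\<integral>\<^sup>+t. (\<integral>\<^sup>+s. ennreal (indicator {0<..} t * t powr (a-1) * hk t y) * ennreal (indicator {0<..} s * s powr (b-1) * hk s z) \<partial>lborel) \<partial>lborel)"
    unfolding Rep_def by (intro nn_integral_cong nn_integral_cmult[symmetric]) measurable
  finally show ?thesis .
qed

lemma nn_pair:
  fixes k :: "real \<times> real \<Rightarrow> ennreal"
  assumes [measurable]: "k \<in> borel_measurable (lborel \<Otimes>\<^sub>M lborel)"
  shows "(\<integral>\<^sup>+p. k p \<partial>(lborel \<Otimes>\<^sub>M lborel)) = (\<integral>\<^sup>+t. (\<integral>\<^sup>+s. k (t, s) \<partial>lborel) \<partial>lborel)"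
  by (rule lborel.nn_integral_fst[symmetric]) simp

lemma sf_pair: "sigma_finite_measure (lborel \<Otimes>\<^sub>M lborel :: (real \<times> real) measure)"
  by (simp add: lborel_prod sigma_finite_lborel)

lemma powr_times_norm:
  fixes z :: "real^'m"
  assumes "z \<noteq> 0"
  shows "norm z powr (2*b - n) * norm z = norm z powr (2*(b+1/2) - n)"
proof -
  have "norm z powr (2*(b+1/2) - n) = norm z powr ((2*b - n) + 1)" by (simp add: algebra_simps)
  also have "\<dots> = norm z powr (2*b - n) * norm z powr 1" by (rule powr_add)
  finally show ?thesis using assms by simp
qed


lemma riesz_vec:
  fixes x :: "real^'m"
  defines "n \<equiv> real CARD('m)"
  assumes x: "x \<noteq> 0" and a: "a > 0" and b: "b \<ge> 0" and ab: "a + b + 1/2 < n/2"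
  shows "(\<integral>y. (norm y powr (2*a - n)) *\<^sub>R ((norm (x - y) powr (2*b - n)) *\<^sub>R (x - y)) \<partial>lborel)
       = (Beta a (b+1) * cR n (a+b) / (cR n a * cR n b) * norm x powr (2*(a+b) - n)) *\<^sub>R x"
proof -
  have an: "a < n/2" and bn: "b < n/2" and abn: "a + b < n/2" using a b ab by auto
  have cpos: "cR n a * cR n b > 0" using an bn by (simp add: cR_pos)
  define Mp where "Mp = (lborel \<Otimes>\<^sub>M lborel :: (real \<times> real) measure)"
  have sf: "sigma_finite_measure Mp" unfolding Mp_def by (rule sf_pair)
  interpret Q: pair_sigma_finite "lborel :: (real^'m) measure" Mp
    unfolding pair_sigma_finite_def using sf sigma_finite_lborel by auto
  define g where "g = (\<lambda>t (y::real^'m). indicator {0<..} t * t powr (a-1) * hk t y)"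
  define h where "h = (\<lambda>s (z::real^'m). indicator {0<..} s * s powr (b-1) * hk s z)"
  define \<Phi> where "\<Phi> = (\<lambda>y (p::real\<times>real). (g (fst p) y * h (snd p) (x - y)) *\<^sub>R (x - y))"
  define \<psi> where "\<psi> = (\<lambda>p::real\<times>real. indicator {0<..} (fst p) * indicator {0<..} (snd p) *
      (fst p powr (a-1) * snd p powr (b-1)) * (snd p / (fst p + snd p) * hk (fst p + snd p) x))"
  have gm[measurable]: "(\<lambda>(t, y). g t y) \<in> borel_measurable (borel \<Otimes>\<^sub>M borel)" unfolding g_def by measurable
  have hm[measurable]: "(\<lambda>(s, z). h s z) \<in> borel_measurable (borel \<Otimes>\<^sub>M borel)" unfolding h_def by measurable
  have g0: "g t y \<ge> 0" for t y by (simp add: g_def hk_nonneg)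
  have h0: "h s z \<ge> 0" for s z by (simp add: h_def hk_nonneg)
  have \<Phi>m[measurable]: "(\<lambda>(y, p). \<Phi> y p) \<in> borel_measurable (lborel \<Otimes>\<^sub>M Mp)"
    unfolding \<Phi>_def Mp_def by measurable
  have \<psi>m[measurable]: "\<psi> \<in> borel_measurable Mp" unfolding \<psi>_def Mp_def by measurable

  have F2: "(\<integral>\<^sup>+p. ennreal (g (fst p) y * h (snd p) (x - y)) \<partial>Mp) = Rep a y * Rep b (x - y)" for y
  proof -
    have "(\<integral>\<^sup>+p. ennreal (g (fst p) y * h (snd p) (x - y)) \<partial>Mp)
        = (\<integral>\<^sup>+t. (\<integral>\<^sup>+s. ennreal (g t y * h s (x - y)) \<partial>lborel) \<partial>lborel)"
      unfolding Mp_def by (subst nn_pair) (simp_all, measurable)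
    also have "\<dots> = Rep a y * Rep b (x - y)"
      unfolding Rep_mult g_def h_def
      by (intro nn_integral_cong) (simp add: ennreal_mult[symmetric] hk_nonneg)
    finally show ?thesis .
  qed

  have F4: "(norm y powr (2*a - n)) *\<^sub>R ((norm (x - y) powr (2*b - n)) *\<^sub>R (x - y))
      = (1 / (cR n a * cR n b)) *\<^sub>R (\<integral>p. \<Phi> y p \<partial>Mp)" if y: "y \<noteq> 0" "y \<noteq> x" for y
  proof -
    have xy: "x - y \<noteq> 0" using y by simp
    have R: "Rep a y * Rep b (x - y) = ennreal (cR n a * norm y powr (2*a - n) * (cR n b * norm (x - y) powr (2*b - n)))"
      using Rep_closed[OF y(1), of a] Rep_closed[OF xy, of b] an bn cR_pos[OF an] cR_pos[OF bn]
      by (simp add: n_def ennreal_mult[symmetric])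
    have sm: "(\<lambda>p. g (fst p) y * h (snd p) (x - y)) \<in> borel_measurable Mp"
      unfolding Mp_def by measurable
    have int: "integrable Mp (\<lambda>p. g (fst p) y * h (snd p) (x - y))"
      by (rule integrableI_nonneg[OF sm]) (auto simp: g0 h0 F2 R)
    have "(\<integral>p. g (fst p) y * h (snd p) (x - y) \<partial>Mp) = enn2real (Rep a y * Rep b (x - y))"
      by (subst integral_eq_nn_integral[OF sm]) (auto simp: g0 h0 F2)
    also have "\<dots> = cR n a * norm y powr (2*a - n) * (cR n b * norm (x - y) powr (2*b - n))"
      using R an bn cR_pos[OF an] cR_pos[OF bn] by simp
    finally have I: "(\<integral>p. g (fst p) y * h (snd p) (x - y) \<partial>Mp) = cR n a * norm y powr (2*a - n) * (cR n b * norm (x - y) powr (2*b - n))" .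
    have "(\<integral>p. \<Phi> y p \<partial>Mp) = (\<integral>p. g (fst p) y * h (snd p) (x - y) \<partial>Mp) *\<^sub>R (x - y)"
      unfolding \<Phi>_def using int by simp
    also have "\<dots> = (cR n a * cR n b) *\<^sub>R ((norm y powr (2*a - n)) *\<^sub>R ((norm (x - y) powr (2*b - n)) *\<^sub>R (x - y)))"
      unfolding I by (simp add: mult_ac)
    finally show ?thesis using cpos cR_pos[OF an] cR_pos[OF bn] by simp
  qed

  have int\<Phi>: "integrable (lborel \<Otimes>\<^sub>M Mp) (\<lambda>(y, p). \<Phi> y p)"
  proof (subst integrable_iff_bounded, intro conjI)
    show "(\<lambda>(y, p). \<Phi> y p) \<in> borel_measurable (lborel \<Otimes>\<^sub>M Mp)" by (rule \<Phi>m)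
    have nm: "(\<lambda>q. ennreal (norm (case q of (y, p) \<Rightarrow> \<Phi> y p))) \<in> borel_measurable (lborel \<Otimes>\<^sub>M Mp)"
      by measurable
    have "(\<integral>\<^sup>+q. ennreal (norm (case q of (y, p) \<Rightarrow> \<Phi> y p)) \<partial>(lborel \<Otimes>\<^sub>M Mp))
        = (\<integral>\<^sup>+y. (\<integral>\<^sup>+p. ennreal (norm (\<Phi> y p)) \<partial>Mp) \<partial>lborel)"
      using Q.M2.nn_integral_fst[OF nm] by simp
    also have "\<dots> = (\<integral>\<^sup>+y. ennreal (cR n a * cR n b) * ennreal (norm y powr (2*a - n) * norm (x - y) powr (2*(b+1/2) - n)) \<partial>lborel)"
    proof (rule nn_integral_cong_AE)
      show "AE y in lborel. (\<integral>\<^sup>+p. ennreal (norm (\<Phi> y p)) \<partial>Mp) = ennreal (cR n a * cR n b) * ennreal (norm y powr (2*a - n) * norm (x - y) powr (2*(b+1/2) - n))"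
        using AE_lborel_singleton[of 0] AE_lborel_singleton[of x]
      proof eventually_elim
        case (elim y)
        then have xy: "x - y \<noteq> 0" by simp
        have "(\<integral>\<^sup>+p. ennreal (norm (\<Phi> y p)) \<partial>Mp) = (\<integral>\<^sup>+p. ennreal (g (fst p) y * h (snd p) (x - y)) * ennreal (norm (x - y)) \<partial>Mp)"
          unfolding \<Phi>_def by (intro nn_integral_cong) (simp add: g0 h0 ennreal_mult[symmetric] abs_mult)
        also have "\<dots> = (\<integral>\<^sup>+p. ennreal (g (fst p) y * h (snd p) (x - y)) \<partial>Mp) * ennreal (norm (x - y))"
          by (rule nn_integral_multc) (unfold Mp_def, measurable)
        also have "\<dots> = ennreal (cR n a * norm y powr (2*a - n) * (cR n b * norm (x - y) powr (2*b - n))) * ennreal (norm (x - y))"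
          using Rep_closed[OF elim(1), of a] Rep_closed[OF xy, of b] an bn cR_pos[OF an] cR_pos[OF bn]
          by (simp add: F2 n_def ennreal_mult[symmetric])
        also have "\<dots> = ennreal (cR n a * cR n b) * ennreal (norm y powr (2*a - n) * norm (x - y) powr (2*(b+1/2) - n))"
          using an bn cR_pos[OF an] cR_pos[OF bn] powr_times_norm[OF xy, of b n]
          by (simp add: ennreal_mult[symmetric] mult_ac)
        finally show ?case .
      qed
    qed
    also have "\<dots> = ennreal (cR n a * cR n b) * (\<integral>\<^sup>+y. ennreal (norm y powr (2*a - n) * norm (x - y) powr (2*(b+1/2) - n)) \<partial>lborel)"
      by (rule nn_integral_cmult) measurable
    also have "\<dots> < \<infinity>"
      using riesz_scalar_nn[OF x a, of "b+1/2"] b ab by (simp add: n_def ennreal_mult_less_top)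
    finally show "(\<integral>\<^sup>+q. ennreal (norm (case q of (y, p) \<Rightarrow> \<Phi> y p)) \<partial>(lborel \<Otimes>\<^sub>M Mp)) < \<infinity>" .
  qed

  have F6: "(\<integral>y. \<Phi> y p \<partial>lborel) = \<psi> p *\<^sub>R x" for p
  proof (cases "fst p > 0 \<and> snd p > 0")
    case True
    define t where "t = fst p"
    define s where "s = snd p"
    have t: "t > 0" and s: "s > 0" using True by (auto simp: t_def s_def)
    have "(\<integral>y. \<Phi> y p \<partial>lborel) = (\<integral>y. (t powr (a-1) * s powr (b-1)) *\<^sub>R ((hk t y * hk s (x - y)) *\<^sub>R (x - y)) \<partial>lborel)"
      unfolding \<Phi>_def g_def h_def t_def[symmetric] s_def[symmetric] using t s
      by (intro Bochner_Integration.integral_cong) (auto simp: mult_ac)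
    also have "\<dots> = (t powr (a-1) * s powr (b-1)) *\<^sub>R (\<integral>y. (hk t y * hk s (x - y)) *\<^sub>R (x - y) \<partial>lborel)"
      by (rule integral_scaleR_right)
    also have "\<dots> = \<psi> p *\<^sub>R x"
      unfolding hk_conv_vec[OF t s] \<psi>_def t_def[symmetric] s_def[symmetric] using t s by (simp add: mult_ac)
    finally show ?thesis .
  next
    case False
    then have "\<And>y. \<Phi> y p = 0" by (auto simp: \<Phi>_def g_def h_def indicator_def)
    moreover have "\<psi> p = 0" using False by (auto simp: \<psi>_def indicator_def)
    ultimately show ?thesis by simp
  qed

  have \<psi>0: "\<psi> p \<ge> 0" for p by (auto simp: \<psi>_def hk_nonneg indicator_def)
  have F7nn: "(\<integral>\<^sup>+p. ennreal (\<psi> p) \<partial>Mp) = ennreal (Beta a (b+1) * (cR n (a+b) * norm x powr (2*(a+b) - n)))"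
  proof -
    have "(\<integral>\<^sup>+p. ennreal (\<psi> p) \<partial>Mp) = (\<integral>\<^sup>+t. (\<integral>\<^sup>+s. ennreal (\<psi> (t, s)) \<partial>lborel) \<partial>lborel)"
      unfolding Mp_def by (rule nn_pair) (unfold \<psi>_def, measurable)
    also have "\<dots> = (\<integral>\<^sup>+t. (\<integral>\<^sup>+s. ennreal (indicator {0<..} t * indicator {0<..} s * (t powr (a-1) * s powr ((b+1)-1))) * ennreal (hk (t+s) x / (t+s)) \<partial>lborel) \<partial>lborel)"
    proof (intro nn_integral_cong)
      fix t s :: real
      show "ennreal (\<psi> (t, s)) = ennreal (indicator {0<..} t * indicator {0<..} s * (t powr (a-1) * s powr ((b+1)-1))) * ennreal (hk (t+s) x / (t+s))"
      proof (cases "t > 0 \<and> s > 0")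
        case True
        have "s powr ((b+1)-1) = s powr ((b-1) + 1)" by simp
        also have "\<dots> = s powr (b-1) * s powr 1" by (rule powr_add)
        finally have "s powr ((b+1)-1) = s powr (b-1) * s" using True by simp
        then show ?thesis using True
          by (simp add: \<psi>_def ennreal_mult[symmetric] hk_nonneg mult_ac)
      next
        case False
        then show ?thesis by (auto simp: \<psi>_def indicator_def)
      qed
    qed
    also have "\<dots> = ennreal (Beta a (b+1)) * (\<integral>\<^sup>+\<tau>. ennreal (indicator {0<..} \<tau> * \<tau> powr (a+(b+1)-1)) * ennreal (hk \<tau> x / \<tau>) \<partial>lborel)"
      using b by (intro beta_conv[OF a]) (simp, measurable)
    also have "(\<integral>\<^sup>+\<tau>. ennreal (indicator {0<..} \<tau> * \<tau> powr (a+(b+1)-1)) * ennreal (hk \<tau> x / \<tau>) \<partial>lborel) = Rep (a+b) x"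
      unfolding Rep_def
    proof (intro nn_integral_cong)
      fix \<tau> :: real
      show "ennreal (indicator {0<..} \<tau> * \<tau> powr (a+(b+1)-1)) * ennreal (hk \<tau> x / \<tau>) = ennreal (indicator {0<..} \<tau> * \<tau> powr (a+b-1) * hk \<tau> x)"
      proof (cases "\<tau> > 0")
        case True
        have "\<tau> powr (a+(b+1)-1) = \<tau> powr ((a+b-1) + 1)" by (simp add: algebra_simps)
        also have "\<dots> = \<tau> powr (a+b-1) * \<tau> powr 1" by (rule powr_add)
        finally have "\<tau> powr (a+(b+1)-1) = \<tau> powr (a+b-1) * \<tau>" using True by simp
        then show ?thesis using True by (simp add: ennreal_mult[symmetric] hk_nonneg)
      qed (simp add: indicator_def)
    qed
    also have "Rep (a+b) x = ennreal (cR n (a+b) * norm x powr (2*(a+b) - n))"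
      using Rep_closed[OF x] abn by (simp add: n_def)
    finally show ?thesis
      using a b abn cR_pos[OF abn] by (simp add: ennreal_mult[symmetric] Beta_def Gamma_real_pos)
  qed
  have int\<psi>: "integrable Mp \<psi>"
    by (rule integrableI_nonneg[OF \<psi>m]) (auto simp: \<psi>0 F7nn)
  have F7: "(\<integral>p. \<psi> p \<partial>Mp) = Beta a (b+1) * (cR n (a+b) * norm x powr (2*(a+b) - n))"
    using a b abn cR_pos[OF abn]
    by (subst integral_eq_nn_integral[OF \<psi>m]) (auto simp: \<psi>0 F7nn Beta_def Gamma_real_pos)

  have m1: "(\<lambda>y. (norm y powr (2*a - n)) *\<^sub>R ((norm (x - y) powr (2*b - n)) *\<^sub>R (x - y))) \<in> borel_measurable lborel"
    by measurable
  have m2: "(\<lambda>y. (1 / (cR n a * cR n b)) *\<^sub>R (\<integral>p. \<Phi> y p \<partial>Mp)) \<in> borel_measurable lborel"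
  proof -
    have "(\<lambda>y. \<integral>p. \<Phi> y p \<partial>Mp) \<in> borel_measurable lborel"
      by (rule Q.M2.borel_measurable_lebesgue_integral) (use \<Phi>m in simp)
    then show ?thesis by measurable
  qed
  have "(\<integral>y. (norm y powr (2*a - n)) *\<^sub>R ((norm (x - y) powr (2*b - n)) *\<^sub>R (x - y)) \<partial>lborel)
      = (\<integral>y. (1 / (cR n a * cR n b)) *\<^sub>R (\<integral>p. \<Phi> y p \<partial>Mp) \<partial>lborel)"
  proof (rule integral_cong_AE[OF m1 m2])
    show "AE y in lborel. (norm y powr (2*a - n)) *\<^sub>R ((norm (x - y) powr (2*b - n)) *\<^sub>R (x - y)) = (1 / (cR n a * cR n b)) *\<^sub>R (\<integral>p. \<Phi> y p \<partial>Mp)"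
      using AE_lborel_singleton[of 0] AE_lborel_singleton[of x]
      by eventually_elim (rule F4; simp)
  qed
  also have "\<dots> = (1 / (cR n a * cR n b)) *\<^sub>R (\<integral>y. (\<integral>p. \<Phi> y p \<partial>Mp) \<partial>lborel)"
    by (rule integral_scaleR_right)
  also have "(\<integral>y. (\<integral>p. \<Phi> y p \<partial>Mp) \<partial>lborel) = (\<integral>p. (\<integral>y. \<Phi> y p \<partial>lborel) \<partial>Mp)"
    by (rule Q.Fubini_integral[OF int\<Phi>, symmetric])
  also have "\<dots> = (\<integral>p. \<psi> p *\<^sub>R x \<partial>Mp)"
    by (simp only: F6)
  also have "\<dots> = (\<integral>p. \<psi> p \<partial>Mp) *\<^sub>R x"
    using int\<psi> by simp
  finally show ?thesis
    unfolding F7 using cpos by (simp add: field_simps)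
qed



definition Acl :: "real \<Rightarrow> nat \<Rightarrow> real" where
  "Acl n k = (-1)^(k+1) * Gamma ((n - real k - 1)/2) / (pi powr (n/2) * 2^(k+1) * Gamma ((real k + 1)/2))"

definition Bcl :: "real \<Rightarrow> nat \<Rightarrow> real" where
  "Bcl n k = (-1)^k * Gamma ((n - real k)/2) / (pi powr (n/2) * 2^(k+1) * Gamma (real k/2 + 1))"

definition c0 :: "real \<Rightarrow> real" where
  "c0 n = - Gamma ((n-1)/2) / (2 * pi powr ((n+1)/2))"

lemma pi_half: "pi powr ((n+1)/2) = pi powr (n/2) * sqrt pi"
proof -
  have "pi powr ((n+1)/2) = pi powr (n/2 + 1/2)" by (simp add: add_divide_distrib)
  also have "\<dots> = pi powr (n/2) * pi powr (1/2)" by (rule powr_add)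
  finally show ?thesis by (simp add: powr_half_sqrt)
qed

lemma Gamma_pos': "x > 0 \<Longrightarrow> Gamma x > (0::real)" by (rule Gamma_real_pos)

lemma ratio_abstract:
  fixes s B C D E F P u v :: real
  assumes "C > 0" "D > 0" "F > 0" "P > 0" "u > 0" "v > 0"
  shows "(s * B / C) * ((1/P) * (u * v) * E) / (((1/P) * u * D) * ((1/P) * v * F)) = s * B * P * E / (C * D * F)"
  using assms by (simp add: field_simps)

lemma cR_ratio:
  assumes b: "b > 0" and nb: "b + 1/2 < n/2"
  shows "Beta (1/2) b * cR n (1/2 + b) / (cR n (1/2) * cR n b)
     = sqrt pi * Gamma b * pi powr (n/2) * Gamma (n/2 - 1/2 - b) / (Gamma (b + 1/2) * Gamma (n/2 - 1/2) * Gamma (n/2 - b))"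
proof -
  have g1: "Gamma (1/2 + b) > 0" "Gamma (n/2 - 1/2) > 0" "Gamma (n/2 - b) > 0"
    using b nb by (auto intro!: Gamma_pos')
  have p0: "pi powr (-n/2) * pi powr (n/2) = 1" by (simp add: powr_add[symmetric])
  have p: "pi powr (-n/2) = 1 / pi powr (n/2)" using p0 by (simp add: eq_divide_eq)
  have f: "(4::real) powr (-(1/2 + b)) = 4 powr (-(1/2)) * 4 powr (-b)"
    by (simp add: powr_add[symmetric])
  have pp: "pi powr (n/2) > 0" by simp
  have e1: "n/2 - (1/2 + b) = n/2 - 1/2 - b" by simp
  have e2: "1/2 + b = b + 1/2" by simp
  have "Beta (1/2) b * cR n (1/2 + b) / (cR n (1/2) * cR n b)
     = (sqrt pi * Gamma b / Gamma (1/2 + b)) * ((1 / pi powr (n/2)) * (4 powr (-(1/2)) * 4 powr (-b)) * Gamma (n/2 - 1/2 - b))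
       / (((1 / pi powr (n/2)) * 4 powr (-(1/2)) * Gamma (n/2 - 1/2)) * ((1 / pi powr (n/2)) * 4 powr (-b) * Gamma (n/2 - b)))"
    unfolding Beta_def cR_def p f e1 by (simp only: Gamma_one_half_real)
  also have "\<dots> = sqrt pi * Gamma b * pi powr (n/2) * Gamma (n/2 - 1/2 - b) / (Gamma (1/2 + b) * Gamma (n/2 - 1/2) * Gamma (n/2 - b))"
    by (rule ratio_abstract) (use g1 pp in auto)
  finally show ?thesis by (simp only: e2)
qed

lemma cR_quot:
  assumes "n/2 - b > 0" "n/2 - 1/2 > 0"
  shows "cR n (1/2 + b) / (cR n (1/2) * cR n b) = pi powr (n/2) * Gamma (n/2 - 1/2 - b) / (Gamma (n/2 - 1/2) * Gamma (n/2 - b))"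
proof -
  have g1: "Gamma (n/2 - 1/2) > 0" "Gamma (n/2 - b) > 0"
    using assms by (auto intro!: Gamma_pos')
  have p0: "pi powr (-n/2) * pi powr (n/2) = 1" by (simp add: powr_add[symmetric])
  have p: "pi powr (-n/2) = 1 / pi powr (n/2)" using p0 by (simp add: eq_divide_eq)
  have f: "(4::real) powr (-(1/2 + b)) = 4 powr (-(1/2)) * 4 powr (-b)"
    by (simp add: powr_add[symmetric])
  have pp: "pi powr (n/2) > 0" by simp
  have e1: "n/2 - (1/2 + b) = n/2 - 1/2 - b" by simp
  have q: "((1/P) * (u * v) * E) / (((1/P) * u * D) * ((1/P) * v * F)) = P * E / (D * F)"
    if "D > 0" "F > 0" "P > 0" "u > 0" "v > 0" for P u v E D F :: real
    using that by (simp add: field_simps)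
  show ?thesis unfolding cR_def p f e1
    by (rule q) (use g1 pp in auto)
qed

lemma c0_eq:
  assumes N: "N \<ge> 2"
  shows "- 2 / ((real N - 1) * sigma (N + 1)) = c0 (real N)"
proof -
  define n where "n = real N"
  have n: "n \<ge> 2" using N by (simp add: n_def)
  have g: "Gamma ((n+1)/2) = (n-1)/2 * Gamma ((n-1)/2)"
  proof -
    have "(n+1)/2 = (n-1)/2 + 1" by (simp add: field_simps)
    moreover have nz: "(n-1)/2 \<notin> \<int>\<^sub>\<le>\<^sub>0" using n by (auto elim!: nonpos_Ints_cases)
    ultimately show ?thesis by (simp only: Gamma_plus1[OF nz])
  qed
  have gp: "Gamma ((n-1)/2) > 0" using n by (intro Gamma_pos') simp
  have s: "sigma (N + 1) = 2 * pi powr ((n+1)/2) / Gamma ((n+1)/2)"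
    by (simp add: sigma_def n_def add.commute)
  have pp: "pi powr ((n+1)/2) > 0" by simp
  show ?thesis unfolding s c0_def n_def[symmetric] g
    using n gp pp by (simp add: field_simps)
qed

lemma A_step:
  assumes k: "real k + 2 < n"
  shows "Acl n (Suc k) = c0 n * Acl n k * (Beta (1/2) ((real k+1)/2) * cR n (1/2 + (real k+1)/2) / (cR n (1/2) * cR n ((real k+1)/2)))"
proof -
  have b: "(real k+1)/2 > 0" "n/2 - (real k+1)/2 > 0" "n/2 - 1/2 > 0" using k by auto
  have Q: "cR n (1/2 + (real k+1)/2) / (cR n (1/2) * cR n ((real k+1)/2)) = pi powr (n/2) * Gamma (n/2 - 1/2 - (real k+1)/2) / (Gamma (n/2 - 1/2) * Gamma (n/2 - (real k+1)/2))"
    using cR_quot[OF b(2,3)] .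
  have a1: "n/2 - 1/2 - (real k+1)/2 = (n - real (Suc k) - 1)/2" by (simp add: field_simps)
  have a2: "n/2 - (real k+1)/2 = (n - real k - 1)/2" by (simp add: field_simps)
  have a3: "1/2 + (real k+1)/2 = (real (Suc k) + 1)/2" by (simp add: field_simps)
  have a4: "n/2 - 1/2 = (n-1)/2" by (simp add: field_simps)
  have e: "Suc k + 1 = k + 2" by simp
  have gp: "Gamma ((n - real k - 1)/2) > 0" "Gamma ((real (Suc k) + 1)/2) > 0" "Gamma ((n-1)/2) > 0" "Gamma ((real k+1)/2) > 0"
    using k by (auto intro!: Gamma_pos')
  have pp: "pi powr (n/2) > 0" "sqrt pi > 0" by auto
  have abs: "(-1)^(k+2) * X / (P * 2^(k+2) * Y) = (- G1 / (2 * (P * sp))) * ((-1)^(k+1) * Z / (P * 2^(k+1) * W)) * ((sp * W / Y) * (P * X / (G1 * Z)))"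
    if "G1 > 0" "Z > 0" "W > 0" "Y > 0" "P > 0" "sp > 0" for X Y Z W G1 P sp :: real
    using that by (simp add: field_simps)
  have "Acl n (Suc k) = c0 n * Acl n k * ((sqrt pi * Gamma ((real k+1)/2) / Gamma ((real (Suc k) + 1)/2)) * (pi powr (n/2) * Gamma ((n - real (Suc k) - 1)/2) / (Gamma ((n-1)/2) * Gamma ((n - real k - 1)/2))))"
    unfolding Acl_def c0_def pi_half e
    by (rule abs) (use gp pp in auto)
  also have "\<dots> = c0 n * Acl n k * (Beta (1/2) ((real k+1)/2) * cR n (1/2 + (real k+1)/2) / (cR n (1/2) * cR n ((real k+1)/2)))"
    unfolding times_divide_eq_right[symmetric] Q unfolding a1 a2 unfolding a4 unfolding Beta_def Gamma_one_half_real a3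
    by (simp add: mult_ac)
  finally show ?thesis .
qed

lemma B_step:
  assumes k: "real k + 2 < n"
  shows "Bcl n (Suc k) = c0 n * Bcl n k * (Beta (1/2) (real k/2 + 1) * cR n (1/2 + real k/2) / (cR n (1/2) * cR n (real k/2)))"
proof -
  have b: "n/2 - real k/2 > 0" "n/2 - 1/2 > 0" using k by auto
  have Q: "cR n (1/2 + real k/2) / (cR n (1/2) * cR n (real k/2)) = pi powr (n/2) * Gamma (n/2 - 1/2 - real k/2) / (Gamma (n/2 - 1/2) * Gamma (n/2 - real k/2))"
    using cR_quot[OF b] .
  have a1: "n/2 - 1/2 - real k/2 = (n - real (Suc k))/2" by (simp add: field_simps)
  have a2: "n/2 - real k/2 = (n - real k)/2" by (simp add: field_simps)
  have a3: "1/2 + (real k/2 + 1) = real (Suc k)/2 + 1" by (simp add: field_simps)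
  have a4: "n/2 - 1/2 = (n-1)/2" by (simp add: field_simps)
  have e: "Suc k + 1 = k + 2" by simp
  have k0: "real k \<ge> 0" by simp
  have gp: "Gamma ((n - real k)/2) > 0" "Gamma (real (Suc k)/2 + 1) > 0" "Gamma ((n-1)/2) > 0" "Gamma (real k/2 + 1) > 0"
    using k k0 by (auto intro!: Gamma_pos' simp del: of_nat_Suc)
  have pp: "pi powr (n/2) > 0" "sqrt pi > 0" by auto
  have abs: "(-1)^(Suc k) * X / (P * 2^(k+2) * Y) = (- G1 / (2 * (P * sp))) * ((-1)^k * Z / (P * 2^(k+1) * W)) * ((sp * W / Y) * (P * X / (G1 * Z)))"
    if "G1 > 0" "Z > 0" "W > 0" "Y > 0" "P > 0" "sp > 0" for X Y Z W G1 P sp :: real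
    using that by (simp add: field_simps)
  have "Bcl n (Suc k) = c0 n * Bcl n k * ((sqrt pi * Gamma (real k/2 + 1) / Gamma (real (Suc k)/2 + 1)) * (pi powr (n/2) * Gamma ((n - real (Suc k))/2) / (Gamma ((n-1)/2) * Gamma ((n - real k)/2))))"
    unfolding Bcl_def c0_def pi_half e
    by (rule abs) (use gp pp in auto)
  also have "\<dots> = c0 n * Bcl n k * (Beta (1/2) (real k/2 + 1) * cR n (1/2 + real k/2) / (cR n (1/2) * cR n (real k/2)))"
    unfolding times_divide_eq_right[symmetric] Q unfolding a1 a2 unfolding a4 unfolding Beta_def Gamma_one_half_real a3
    by (simp add: mult_ac)
  finally show ?thesis .
qed


lemma Gamma_plus1_pos: "x > 0 \<Longrightarrow> Gamma (x + 1) = x * Gamma (x::real)"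
proof -
  assume x: "x > 0"
  have "x \<notin> \<int>\<^sub>\<le>\<^sub>0" using x by (auto elim!: nonpos_Ints_cases)
  then show ?thesis by (rule Gamma_plus1)
qed

lemma prodG:
  fixes z :: real
  assumes "z - real j > 0"
  shows "(\<Prod>i=1..j. (2*z - 2*real i)) * Gamma (z - real j) = 2^j * Gamma z"
  using assms
proof (induction j)
  case 0
  then show ?case by simp
next
  case (Suc j)
  have IH: "(\<Prod>i=1..j. (2*z - 2*real i)) * Gamma (z - real j) = 2^j * Gamma z"
    using Suc.IH Suc.prems by simp
  have g: "Gamma (z - real j) = (z - real (Suc j)) * Gamma (z - real (Suc j))"
  proof -
    have "z - real j = (z - real (Suc j)) + 1" by simp
    then show ?thesis using Gamma_plus1_pos[of "z - real (Suc j)"] Suc.prems by simp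
  qed
  have "(\<Prod>i=1..Suc j. (2*z - 2*real i)) * Gamma (z - real (Suc j))
      = (\<Prod>i=1..j. (2*z - 2*real i)) * (2 * ((z - real (Suc j)) * Gamma (z - real (Suc j))))"
    by (simp add: prod.nat_ivl_Suc' mult_ac)
  also have "\<dots> = 2 * ((\<Prod>i=1..j. (2*z - 2*real i)) * Gamma (z - real j))"
    by (simp add: g mult_ac)
  also have "\<dots> = 2^(Suc j) * Gamma z" unfolding IH by simp
  finally show ?case .
qed

lemma pi_powr_nat: "pi powr (real j) = pi ^ j"
  by (simp add: powr_realpow)

lemma final_a_odd:
  assumes j: "j \<ge> 1" and N: "real N \<ge> 2 * real j + 1"
  shows "Acl (real N) (2*j - 1) = 1 / (2 ^ (j - 1) * pi ^ j) * (1 / (\<Prod>i = 1..j. real N - 2 * real i))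
           * (1 / sigma N) * (pi powr (real (2*j) / 2) / Gamma (real (2*j) / 2))"
proof -
  define n where "n = real N"
  obtain j' where j': "j = Suc j'" using j by (cases j) auto
  have r1: "real (2*j - 1) = 2 * real j - 1" using j by (simp add: of_nat_diff)
  have pr: "(\<Prod>i = 1..j. n - 2 * real i) * Gamma (n/2 - real j) = 2^j * Gamma (n/2)"
    using prodG[of "n/2" j] N by (simp add: n_def)
  have G: "Gamma (n/2 - real j) > 0" "Gamma (n/2) > 0" "Gamma (real j) > 0" using N j by (auto simp: n_def)
  have Pr: "(\<Prod>i = 1..j. n - 2 * real i) = 2^j * Gamma (n/2) / Gamma (n/2 - real j)"
    using pr G by (simp add: eq_divide_eq)
  have a1: "(n - (2 * real j - 1) - 1) / 2 = n/2 - real j" by (simp add: field_simps)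
  have a2: "(2 * real j - 1 + 1) / 2 = real j" by simp
  have s: "sigma N = 2 * pi powr (n/2) / Gamma (n/2)" by (simp add: sigma_def n_def)
  have e: "real (2*j) / 2 = real j" by simp
  have ev: "(-1::real) ^ (2*j - 1 + 1) = 1" using j by simp
  have pw: "(2::real) ^ (2*j - 1 + 1) = 2^(j-1) * 2 ^ j * 2"
  proof -
    have "(2::real)^(j-1) * 2 ^ j * 2 = 2^((j-1) + j + 1)" by (simp only: power_add power_one_right)
    moreover have "(j-1) + j + 1 = 2*j - 1 + 1" using j by simp
    ultimately show ?thesis by simp
  qed
  show ?thesis
    unfolding Acl_def n_def[symmetric] r1 a1 a2 s e pi_powr_nat Pr ev pw
    using G by (simp add: field_simps)
qed

lemma final_b_odd:
  assumes j: "j \<ge> 1" and N: "real N \<ge> 2 * real j + 1"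
  shows "Bcl (real N) (2*j - 1) = - 1 / (2 ^ (j - 1) * pi ^ j) * (1 / (\<Prod>i = 1..j. real N - 2 * real i + 1))
           * (1 / sigma (N + 1)) * (pi powr ((real (2*j) + 1) / 2) / Gamma ((real (2*j) + 1) / 2))"
proof -
  define n where "n = real N"
  obtain j' where j': "j = Suc j'" using j by (cases j) auto
  have r1: "real (2*j - 1) = 2 * real j - 1" using j by (simp add: of_nat_diff)
  have pr0: "(\<Prod>i = 1..j. 2 * ((n+1)/2) - 2 * real i) * Gamma ((n+1)/2 - real j) = 2^j * Gamma ((n+1)/2)"
    using N by (intro prodG) (simp add: n_def)
  have pc: "(\<Prod>i = 1..j. 2 * ((n+1)/2) - 2 * real i) = (\<Prod>i = 1..j. n - 2 * real i + 1)"
    by (intro prod.cong) auto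
  have G: "Gamma ((n+1)/2 - real j) > 0" "Gamma ((n+1)/2) > 0" "Gamma (real j + 1/2) > 0" using N j by (auto simp: n_def)
  have Pr: "(\<Prod>i = 1..j. n - 2 * real i + 1) = 2^j * Gamma ((n+1)/2) / Gamma ((n+1)/2 - real j)"
    using pr0 G unfolding pc by (simp add: eq_divide_eq)
  have a1: "(n - (2 * real j - 1)) / 2 = (n+1)/2 - real j" by (simp add: field_simps)
  have a2: "(2 * real j - 1) / 2 + 1 = real j + 1/2" by (simp add: field_simps)
  have a3: "(real (2*j) + 1) / 2 = real j + 1/2" by simp
  have s: "sigma (N + 1) = 2 * pi powr ((n+1)/2) / Gamma ((n+1)/2)" by (simp add: sigma_def n_def add.commute)
  have pj: "pi powr (real j + 1/2) = pi ^ j * sqrt pi"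
    by (simp add: powr_add powr_half_sqrt pi_powr_nat)
  have od: "(-1::real) ^ (2*j - 1) = -1" using j' by simp
  have pw: "(2::real) ^ (2*j - 1 + 1) = 2^(j-1) * 2 ^ j * 2"
  proof -
    have "(2::real)^(j-1) * 2 ^ j * 2 = 2^((j-1) + j + 1)" by (simp only: power_add power_one_right)
    moreover have "(j-1) + j + 1 = 2*j - 1 + 1" using j by simp
    ultimately show ?thesis by simp
  qed
  have pp: "pi powr (n/2) > 0" "sqrt pi > 0" by auto
  show ?thesis
    unfolding Bcl_def n_def[symmetric] r1 a1 a2 a3 s pj Pr od pw pi_half
    using G pp by (simp add: field_simps)
qed

lemma final_a_even:
  assumes j: "j \<ge> 1" and N: "real N \<ge> 2 * real j + 2"
  shows "Acl (real N) (2*j) = - 1 / (2 ^ (j - 1) * pi ^ j) * (1 / (\<Prod>i = 0..j. real N - 2 * real i - 1))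
           * (1 / sigma (N + 1)) * (pi powr (real (2*j+1) / 2) / Gamma (real (2*j+1) / 2))"
proof -
  define n where "n = real N"
  obtain j' where j': "j = Suc j'" using j by (cases j) auto
  have pr0: "(\<Prod>i = 1..Suc j. 2 * ((n+1)/2) - 2 * real i) * Gamma ((n+1)/2 - real (Suc j)) = 2^(Suc j) * Gamma ((n+1)/2)"
    using N by (intro prodG) (simp add: n_def)
  have pc: "(\<Prod>i = 1..Suc j. 2 * ((n+1)/2) - 2 * real i) = (\<Prod>i = 0..j. n - 2 * real i - 1)"
  proof -
    have "(\<Prod>i = 1..Suc j. 2 * ((n+1)/2) - 2 * real i) = (\<Prod>i = Suc 0..Suc j. 2 * ((n+1)/2) - 2 * real i)" by simp
    also have "\<dots> = (\<Prod>i = 0..j. 2 * ((n+1)/2) - 2 * real (Suc i))"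
      by (rule prod.atLeast_Suc_atMost_Suc_shift[unfolded comp_def])
    also have "\<dots> = (\<Prod>i = 0..j. n - 2 * real i - 1)"
      by (intro prod.cong) (auto simp: field_simps)
    finally show ?thesis .
  qed
  have G: "Gamma ((n+1)/2 - real (Suc j)) > 0" "Gamma ((n+1)/2) > 0" "Gamma (real j + 1/2) > 0" using N j by (auto simp: n_def)
  have Pr: "(\<Prod>i = 0..j. n - 2 * real i - 1) = 2^(Suc j) * Gamma ((n+1)/2) / Gamma ((n+1)/2 - real (Suc j))"
    using pr0 G unfolding pc by (simp add: eq_divide_eq)
  have a1: "(n - real (2*j) - 1) / 2 = (n+1)/2 - real (Suc j)" by (simp add: field_simps)
  have a2: "(real (2*j) + 1) / 2 = real j + 1/2" by simp
  have a3: "real (2*j+1) / 2 = real j + 1/2" by simp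
  have s: "sigma (N + 1) = 2 * pi powr ((n+1)/2) / Gamma ((n+1)/2)" by (simp add: sigma_def n_def add.commute)
  have pj: "pi powr (real j + 1/2) = pi ^ j * sqrt pi"
    by (simp add: powr_add powr_half_sqrt pi_powr_nat)
  have od: "(-1::real) ^ (2*j + 1) = -1" by simp
  have pw: "(2::real) ^ (2*j + 1) = 2^(j-1) * 2 ^ (Suc j) * 2"
  proof -
    have "(2::real)^(j-1) * 2 ^ (Suc j) * 2 = 2^((j-1) + Suc j + 1)" by (simp only: power_add power_one_right)
    moreover have "(j-1) + Suc j + 1 = 2*j + 1" using j by simp
    ultimately show ?thesis by simp
  qed
  have pp: "pi powr (n/2) > 0" "sqrt pi > 0" by auto
  show ?thesis
    unfolding Acl_def n_def[symmetric] a1 a2 a3 s pj Pr od pw pi_half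
    using G pp by (simp add: field_simps)
qed

lemma final_b_even:
  assumes j: "j \<ge> 1" and N: "real N \<ge> 2 * real j + 2"
  shows "Bcl (real N) (2*j) = 1 / (2 ^ j * pi ^ (j + 1)) * (1 / (\<Prod>i = 1..j. real N - 2 * real i))
           * (1 / sigma N) * (pi powr ((real (2*j+1) + 1) / 2) / Gamma ((real (2*j+1) + 1) / 2))"
proof -
  define n where "n = real N"
  have pr: "(\<Prod>i = 1..j. n - 2 * real i) * Gamma (n/2 - real j) = 2^j * Gamma (n/2)"
    using prodG[of "n/2" j] N by (simp add: n_def)
  have G: "Gamma (n/2 - real j) > 0" "Gamma (n/2) > 0" "Gamma (real j + 1) > 0" using N j by (auto simp: n_def)
  have Pr: "(\<Prod>i = 1..j. n - 2 * real i) = 2^j * Gamma (n/2) / Gamma (n/2 - real j)"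
    using pr G by (simp add: eq_divide_eq)
  have a1: "(n - real (2*j)) / 2 = n/2 - real j" by (simp add: field_simps)
  have a2: "real (2*j) / 2 + 1 = real j + 1" by simp
  have a3: "(real (2*j+1) + 1) / 2 = real (j + 1)" by simp
  have s: "sigma N = 2 * pi powr (n/2) / Gamma (n/2)" by (simp add: sigma_def n_def)
  have ev: "(-1::real) ^ (2*j) = 1" by simp
  have pw: "(2::real) ^ (2*j + 1) = 2 ^ j * 2 ^ j * 2"
  proof -
    have "(2::real)^j * 2 ^ j * 2 = 2^(j + j + 1)" by (simp only: power_add power_one_right)
    moreover have "j + j + 1 = 2*j + 1" by simp
    ultimately show ?thesis by simp
  qed
  have pp: "pi powr (n/2) > 0" by auto
  show ?thesis
    unfolding Bcl_def n_def[symmetric] a1 a2 a3 s pi_powr_nat Pr ev pw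
    using G pp by (simp add: field_simps)
qed


lemma azero_measurable[measurable]: "azero \<in> borel_measurable borel"
  unfolding azero_def[abs_def] by measurable

lemma acoef_measurable[measurable]: "acoef k \<in> borel_measurable borel"
proof (induction k)
  case 0
  then show ?case by (simp add: azero_measurable acoef.simps(1)[abs_def])
next
  case (Suc k)
  note [measurable] = Suc.IH
  have "(\<lambda>x. LINT y|lborel. azero y * acoef k (x - y)) \<in> borel_measurable (borel :: (real^'a) measure)"
    by measurable
  moreover have "acoef (Suc k) = (\<lambda>x. LINT y|lborel. azero y * acoef k (x - y))"
    by (rule ext) simp
  ultimately show ?case by simp
qed

lemma bcoef_measurable[measurable]: "bcoef k \<in> borel_measurable borel"
proof (induction k)
  case 0
  have "(\<lambda>x::real^'a. (1 / sigma CARD('a) / norm x powr real CARD('a)) *\<^sub>R x) \<in> borel_measurable borel"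
    by measurable
  moreover have "bcoef 0 = (\<lambda>x::real^'a. (1 / sigma CARD('a) / norm x powr real CARD('a)) *\<^sub>R x)"
    by (rule ext) simp
  ultimately show ?case by simp
next
  case (Suc k)
  note [measurable] = Suc.IH
  have "(\<lambda>x. LINT y|lborel. azero y *\<^sub>R bcoef k (x - y)) \<in> borel_measurable (borel :: (real^'a) measure)"
    by measurable
  moreover have "bcoef (Suc k) = (\<lambda>x. LINT y|lborel. azero y *\<^sub>R bcoef k (x - y))"
    by (rule ext) simp
  ultimately show ?case by simp
qed

lemma azero_eq:
  assumes N: "CARD('m) \<ge> 2"
  shows "azero (y::real^'m) = c0 (real CARD('m)) * norm y powr (2*(1/2) - real CARD('m))"
proof -
  define n where "n = real CARD('m)"
  have e: "2*(1/2) - n = - (n - 1)" by simp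
  have "norm y powr (2*(1/2) - n) = 1 / norm y powr (n - 1)"
    unfolding e by (rule powr_minus_divide)
  then show ?thesis
    using c0_eq[OF N] by (simp add: azero_def n_def)
qed

lemma Acl0: "Acl n 0 = c0 n"
  by (simp add: Acl_def c0_def pi_half Gamma_one_half_real mult_ac)

lemma Bcl0: "Bcl (real N) 0 = 1 / sigma N"
  by (simp add: Bcl_def sigma_def)

lemma acoef_closed:
  fixes x :: "real^'m"
  shows "Suc (Suc k) \<le> CARD('m) \<Longrightarrow> x \<noteq> 0 \<Longrightarrow> acoef k x = Acl (real CARD('m)) k * norm x powr (real k + 1 - real CARD('m))"
proof (induction k arbitrary: x)
  case 0
  then have N: "CARD('m) \<ge> 2" by simp
  show ?case using azero_eq[OF N, of x] by (simp add: Acl0)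
next
  case (Suc k)
  define n where "n = real CARD('m)"
  have N: "CARD('m) \<ge> 2" and kN: "real k + 2 < n" using Suc.prems by (auto simp: n_def)
  have e: "2*((real k + 1)/2) - n = real k + 1 - n" by (simp add: field_simps)
  have IH: "acoef k z = Acl n k * norm z powr (2*((real k + 1)/2) - n)" if "z \<noteq> 0" for z :: "real^'m"
    unfolding e using Suc.IH[OF _ that] Suc.prems by (simp add: n_def)
  have a: "(1/2::real) > 0" and b: "(real k + 1)/2 > 0" and ab: "1/2 + (real k + 1)/2 < n/2" using kN by (auto simp: field_simps)
  have m1: "(\<lambda>y. azero y * acoef k (x - y)) \<in> borel_measurable lborel" by measurable
  have m2: "(\<lambda>y::real^'m. (c0 n * Acl n k) * (norm y powr (2*(1/2) - n) * norm (x - y) powr (2*((real k + 1)/2) - n))) \<in> borel_measurable lborel"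
    by measurable
  have "acoef (Suc k) x = (LINT y|lborel. azero y * acoef k (x - y))" by simp
  also have "\<dots> = (LINT y|lborel. (c0 n * Acl n k) * (norm y powr (2*(1/2) - n) * norm (x - y) powr (2*((real k + 1)/2) - n)))"
  proof (rule integral_cong_AE[OF m1 m2])
    show "AE y in lborel. azero y * acoef k (x - y) = (c0 n * Acl n k) * (norm y powr (2*(1/2) - n) * norm (x - y) powr (2*((real k + 1)/2) - n))"
      using AE_lborel_singleton[of x]
    proof eventually_elim
      case (elim y)
      then have "x - y \<noteq> 0" by simp
      then show ?case using IH[of "x - y"] azero_eq[OF N, of y] by (simp add: n_def mult_ac)
    qed
  qed
  also have "\<dots> = (c0 n * Acl n k) * (LINT y|lborel. norm y powr (2*(1/2) - n) * norm (x - y) powr (2*((real k + 1)/2) - n))"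
    by (rule integral_mult_right_zero)
  also have "(LINT y|lborel. norm y powr (2*(1/2) - n) * norm (x - y) powr (2*((real k + 1)/2) - n))
      = Beta (1/2) ((real k+1)/2) * cR n (1/2 + (real k+1)/2) / (cR n (1/2) * cR n ((real k+1)/2)) * norm x powr (2*(1/2 + (real k+1)/2) - n)"
  proof -
    have nn: "Beta (1/2) ((real k+1)/2) * cR n (1/2 + (real k+1)/2) / (cR n (1/2) * cR n ((real k+1)/2)) * norm x powr (2*(1/2 + (real k+1)/2) - n) \<ge> 0"
    proof -
      have p1: "Beta (1/2) ((real k+1)/2) > 0" unfolding Beta_def
        by (intro divide_pos_pos mult_pos_pos Gamma_real_pos) (auto simp: add_pos_nonneg)
      have p2: "cR n (1/2 + (real k+1)/2) > 0" "cR n (1/2) > 0" "cR n ((real k+1)/2) > 0"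
        using kN by (auto intro!: cR_pos simp: field_simps)
      show ?thesis using p1 p2 by (intro mult_nonneg_nonneg divide_nonneg_pos) auto
    qed
    show ?thesis
      using riesz_scalar_nn[OF Suc.prems(2) a b, unfolded n_def[symmetric], OF ab] nn
      by (subst integral_eq_nn_integral) auto
  qed
  also have "2*(1/2 + (real k+1)/2) - n = real (Suc k) + 1 - n" by simp
  finally show ?case using A_step[OF kN] by (simp add: n_def mult_ac)
qed

lemma bcoef_closed:
  fixes x :: "real^'m"
  shows "Suc (Suc k) \<le> CARD('m) \<Longrightarrow> x \<noteq> 0 \<Longrightarrow> bcoef k x = Bcl (real CARD('m)) k *\<^sub>R (norm x powr (real k - real CARD('m)) *\<^sub>R x)"
proof (induction k arbitrary: x)
  case 0
  have "norm x powr (- real CARD('m)) = 1 / norm x powr real CARD('m)" by (rule powr_minus_divide)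
  then show ?case by (simp add: Bcl0)
next
  case (Suc k)
  define n where "n = real CARD('m)"
  have N: "CARD('m) \<ge> 2" and kN: "real k + 2 < n" using Suc.prems by (auto simp: n_def)
  have e: "2*(real k/2) - n = real k - n" by (simp add: field_simps)
  have IH: "bcoef k z = Bcl n k *\<^sub>R (norm z powr (2*(real k/2) - n) *\<^sub>R z)" if "z \<noteq> 0" for z :: "real^'m"
    unfolding e using Suc.IH[OF _ that] Suc.prems by (simp add: n_def)
  have a: "(1/2::real) > 0" and b: "real k/2 \<ge> 0" and ab: "1/2 + real k/2 + 1/2 < n/2" using kN by (auto simp: field_simps)
  have m1: "(\<lambda>y. azero y *\<^sub>R bcoef k (x - y)) \<in> borel_measurable lborel" by measurable
  have m2: "(\<lambda>y::real^'m. (c0 n * Bcl n k) *\<^sub>R ((norm y powr (2*(1/2) - n)) *\<^sub>R ((norm (x - y) powr (2*(real k/2) - n)) *\<^sub>R (x - y)))) \<in> borel_measurable lborel"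
    by measurable
  have "bcoef (Suc k) x = (LINT y|lborel. azero y *\<^sub>R bcoef k (x - y))" by simp
  also have "\<dots> = (LINT y|lborel. (c0 n * Bcl n k) *\<^sub>R ((norm y powr (2*(1/2) - n)) *\<^sub>R ((norm (x - y) powr (2*(real k/2) - n)) *\<^sub>R (x - y))))"
  proof (rule integral_cong_AE[OF m1 m2])
    show "AE y in lborel. azero y *\<^sub>R bcoef k (x - y) = (c0 n * Bcl n k) *\<^sub>R ((norm y powr (2*(1/2) - n)) *\<^sub>R ((norm (x - y) powr (2*(real k/2) - n)) *\<^sub>R (x - y)))"
      using AE_lborel_singleton[of x]
    proof eventually_elim
      case (elim y)
      then have "x - y \<noteq> 0" by simp
      then show ?case using IH[of "x - y"] azero_eq[OF N, of y] by (simp add: n_def mult_ac)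
    qed
  qed
  also have "\<dots> = (c0 n * Bcl n k) *\<^sub>R (LINT y|lborel. (norm y powr (2*(1/2) - n)) *\<^sub>R ((norm (x - y) powr (2*(real k/2) - n)) *\<^sub>R (x - y)))"
    by (rule integral_scaleR_right)
  also have "(LINT y|lborel. (norm y powr (2*(1/2) - n)) *\<^sub>R ((norm (x - y) powr (2*(real k/2) - n)) *\<^sub>R (x - y)))
      = (Beta (1/2) (real k/2 + 1) * cR n (1/2 + real k/2) / (cR n (1/2) * cR n (real k/2)) * norm x powr (2*(1/2 + real k/2) - n)) *\<^sub>R x"
    using riesz_vec[OF Suc.prems(2) a b, unfolded n_def[symmetric], OF ab] by simp
  also have "2*(1/2 + real k/2) - n = real (Suc k) - n" by simp
  finally show ?case using B_step[OF kN] by (simp add: n_def mult_ac)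
qed


theorem mainTheorem17:
  fixes j :: nat
  assumes "j \<ge> 1"
  shows "(CARD('m) \<ge> 2 * j + 1 \<longrightarrow>
           (\<forall>x :: real^'m. x \<noteq> 0 \<longrightarrow>
              acoef (2 * j - 1) x =
                1 / (2 ^ (j - 1) * pi ^ j)
                * (1 / (\<Prod>i = 1..j. real CARD('m) - 2 * real i))
                * (1 / sigma CARD('m)) * Tstar (2 * j) x
            \<and> bcoef (2 * j - 1) x =
                (- 1 / (2 ^ (j - 1) * pi ^ j)
                * (1 / (\<Prod>i = 1..j. real CARD('m) - 2 * real i + 1))
                * (1 / sigma (CARD('m) + 1))) *\<^sub>R Ustar (2 * j) x))
       \<and> (CARD('m) \<ge> 2 * j + 2 \<longrightarrow>
           (\<forall>x :: real^'m. x \<noteq> 0 \<longrightarrow>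
              acoef (2 * j) x =
                - 1 / (2 ^ (j - 1) * pi ^ j)
                * (1 / (\<Prod>i = 0..j. real CARD('m) - 2 * real i - 1))
                * (1 / sigma (CARD('m) + 1)) * Tstar (2 * j + 1) x
            \<and> bcoef (2 * j) x =
                (1 / (2 ^ j * pi ^ (j + 1))
                * (1 / (\<Prod>i = 1..j. real CARD('m) - 2 * real i))
                * (1 / sigma CARD('m))) *\<^sub>R Ustar (2 * j + 1) x))"
proof (intro conjI impI allI)
  define n where "n = real CARD('m)"
  {
    fix x :: "real^'m"
    assume N: "CARD('m) \<ge> 2 * j + 1" and x: "x \<noteq> 0"
    have Nr: "real CARD('m) \<ge> 2 * real j + 1" using N by linarith
    have k: "Suc (Suc (2*j - 1)) \<le> CARD('m)" using N assms by simp
    have r: "real (2*j - 1) + 1 = real (2*j)" using assms by (simp add: of_nat_diff)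
    have r2: "real (2*j - 1) = real (2*j) - 1" using assms by (simp add: of_nat_diff)
    show "acoef (2 * j - 1) x =
                1 / (2 ^ (j - 1) * pi ^ j)
                * (1 / (\<Prod>i = 1..j. real CARD('m) - 2 * real i))
                * (1 / sigma CARD('m)) * Tstar (2 * j) x"
      unfolding acoef_closed[OF k x] final_a_odd[OF assms Nr] Tstar_def r
      by (simp add: mult_ac)
    have pw: "norm x powr (real (2*j) - real CARD('m)) / norm x = norm x powr (real (2*j - 1) - real CARD('m))"
    proof -
      have "real (2*j) - real CARD('m) = (real (2*j - 1) - real CARD('m)) + 1" using r2 by simp
      then have "norm x powr (real (2*j) - real CARD('m)) = norm x powr (real (2*j - 1) - real CARD('m)) * norm x powr 1"
        by (simp only: powr_add)
      then show ?thesis using x by simp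
    qed
    show "bcoef (2 * j - 1) x =
                (- 1 / (2 ^ (j - 1) * pi ^ j)
                * (1 / (\<Prod>i = 1..j. real CARD('m) - 2 * real i + 1))
                * (1 / sigma (CARD('m) + 1))) *\<^sub>R Ustar (2 * j) x"
      unfolding bcoef_closed[OF k x] final_b_odd[OF assms Nr] Ustar_def times_divide_eq_right[symmetric] pw
      by (simp add: mult_ac)
  }
  {
    fix x :: "real^'m"
    assume N: "CARD('m) \<ge> 2 * j + 2" and x: "x \<noteq> 0"
    have Nr: "real CARD('m) \<ge> 2 * real j + 2" using N by linarith
    have k: "Suc (Suc (2*j)) \<le> CARD('m)" using N by simp
    have r: "real (2*j) + 1 = real (2*j+1)" by simp
    show "acoef (2 * j) x =
                - 1 / (2 ^ (j - 1) * pi ^ j)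
                * (1 / (\<Prod>i = 0..j. real CARD('m) - 2 * real i - 1))
                * (1 / sigma (CARD('m) + 1)) * Tstar (2 * j + 1) x"
      unfolding acoef_closed[OF k x] final_a_even[OF assms Nr] Tstar_def r
      by (simp add: mult_ac)
    have pw: "norm x powr (real (2*j+1) - real CARD('m)) / norm x = norm x powr (real (2*j) - real CARD('m))"
    proof -
      have "real (2*j+1) - real CARD('m) = (real (2*j) - real CARD('m)) + 1" by simp
      then have "norm x powr (real (2*j+1) - real CARD('m)) = norm x powr (real (2*j) - real CARD('m)) * norm x powr 1"
        by (simp only: powr_add)
      then show ?thesis using x by simp
    qed
    show "bcoef (2 * j) x =
                (1 / (2 ^ j * pi ^ (j + 1))
                * (1 / (\<Prod>i = 1..j. real CARD('m) - 2 * real i))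
                * (1 / sigma CARD('m))) *\<^sub>R Ustar (2 * j + 1) x"
      unfolding bcoef_closed[OF k x] final_b_even[OF assms Nr] Ustar_def times_divide_eq_right[symmetric] pw
      by (simp add: mult_ac)
  }
qed


end
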